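(* Let $\Sigma$ be a weighted metric graph with $\partial\Sigma=\emptyset$ and without isolated vertices. Then the bilinear pairings $H^{0,0}(\Sigma)\times H^{1,1}(\Sigma)\to\mathbb R$ and $H^{1,0}(\Sigma)\times H^{0,1}(\Sigma)\to\mathbb R$ induced by $(\alpha,\beta)\mapsto\int_\Sigma\alpha\wedge\beta$ (which descend to cohomology by Stokes' theorem) are perfect.
   Context: A weighted metric graph with boundary $(\Sigma,\partial\Sigma)$: a finite multigraph without loop edges, with for each oriented edge $e$ (tail $e^-$, head $e^+$) a length $\ell(e)>0$, parametrization $t_e\colon[0,\ell(e)]\to e$, $t_e(0)=e^-$, $t_{\bar e}(x)=t_e(\ell(e)-x)$, weight $w(e)=w(\bar e)\in\mathbb Z_{>0}$, and boundary $\partial\Sigma\subset V(\Sigma)$ (here empty). A pair $(f_1,f_2)$ of smooth functions on the two outgoing edges $e_1,e_2$ at a valency-2 vertex $v$ is smooth at $v$ if $w(e_1)^n\frac{d^nf_1}{dt_{e_1}^n}(v)=(-1)^nw(e_2)^n\frac{d^nf_2}{dt_{e_2}^n}(v)$ for all $n\ge0$. Smooth forms at interior vertices $v$: $\mathcal A^{0,0}$: continuous $f$, smooth on edges, constant near valency-1 vertices, $(f|_{e_1},f|_{e_2})$ smooth at valency-2 vertices, $\sum_{e^-=v}w(e)\frac{df}{dt_e}(v)=0$ at valency $\ge3$. $\mathcal A^{1,0}$ (resp. $\mathcal A^{0,1}$): $(f_e\,d't_e)$ (resp. $(f_e\,d''t_e)$), $f_{\bar e}=-f_e$, $f_e=0$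 near valency-1 vertices, $(w(e_1)f_{e_1},-w(e_2)f_{e_2})$ smooth at valency-2 vertices, $\sum_{e^-=v}w(e)f_e(v)=0$ at valency $\ge3$. $\mathcal A^{1,1}$: $(f_e\,d't_ed''t_e)$, $f_{\bar e}=f_e$, zero near valency-1 vertices, $(w(e_1)^2f_{e_1},w(e_2)^2f_{e_2})$ smooth at valency-2 vertices. $d''f=(\frac{df}{dt_e}d''t_e)$, $d''(f_e\,d't_e)=(-\frac{df_e}{dt_e}d't_ed''t_e)$; wedge: $g\cdot(f_e\,d't_ed''t_e)=(gf_e\,d't_ed''t_e)$, $(f_e\,d't_e)\wedge(g_e\,d''t_e)=(f_eg_e\,d't_ed''t_e)$. $H^{p,0}(\Sigma)=\ker(d''\colon\mathcal A^{p,0}\to\mathcal A^{p,1})$, $H^{p,1}(\Sigma)=\operatorname{coker}$ of the same map. $\int_\Sigma(f_e\,d't_ed''t_e)=\frac12\sum_{e\text{ oriented}}w(e)\int_0^{\ell(e)}f_e\circ t_e\,dx$. *)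

theory Defs
  imports "HOL-Analysis.Analysis"
begin

text \<open>Oriented edges are elements of type 'e; rev is edge reversal (e to e-bar),
  tail e is e^-, the head e^+ is tail (rev e). len is the length, wt the weight.\<close>

record ('v, 'e) wmgraph =
  verts :: "'v set"
  edges :: "'e set"
  rev   :: "'e \<Rightarrow> 'e"
  tail  :: "'e \<Rightarrow> 'v"
  len   :: "'e \<Rightarrow> real"
  wt    :: "'e \<Rightarrow> nat"

definition head :: "('v, 'e) wmgraph \<Rightarrow> 'e \<Rightarrow> 'v" where
  "head G e = tail G (rev G e)"

definition wmg :: "('v, 'e) wmgraph \<Rightarrow> bool" where
  "wmg G \<longleftrightarrow> finite (verts G) \<and> finite (edges G) \<and>
     (\<forall>e\<in>edges G. rev G e \<in> edges G \<and> rev G (rev G e) = e \<and> rev G e \<noteq> e \<and>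
        tail G e \<in> verts G \<and> head G e \<noteq> tail G e \<and>
        len G e > 0 \<and> len G (rev G e) = len G e \<and>
        wt G e > 0 \<and> wt G (rev G e) = wt G e)"

definition out_edges :: "('v, 'e) wmgraph \<Rightarrow> 'v \<Rightarrow> 'e set" where
  "out_edges G v = {e \<in> edges G. tail G e = v}"

definition valency :: "('v, 'e) wmgraph \<Rightarrow> 'v \<Rightarrow> nat" where
  "valency G v = card (out_edges G v)"

definition no_isolated_vertices :: "('v, 'e) wmgraph \<Rightarrow> bool" where
  "no_isolated_vertices G \<longleftrightarrow> (\<forall>v\<in>verts G. valency G v \<ge> 1)"

definition deriv_seq :: "real \<Rightarrow> (real \<Rightarrow> real) \<Rightarrow> (nat \<Rightarrow> real \<Rightarrow> real) \<Rightarrow> bool" where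
  "deriv_seq l f D \<longleftrightarrow> (\<forall>x\<in>{0..l}. D 0 x = f x) \<and>
     (\<forall>n. \<forall>x\<in>{0..l}. (D n has_real_derivative D (Suc n) x) (at x within {0..l}))"

definition smooth_cl :: "real \<Rightarrow> (real \<Rightarrow> real) \<Rightarrow> bool" where
  "smooth_cl l f \<longleftrightarrow> (\<exists>D. deriv_seq l f D)"

text \<open>n-th derivative of f at x in [0,l] (well defined for smooth f and l > 0).\<close>
definition nderiv :: "real \<Rightarrow> (real \<Rightarrow> real) \<Rightarrow> nat \<Rightarrow> real \<Rightarrow> real" where
  "nderiv l f n x = (SOME D. deriv_seq l f D) n x"

text \<open>Smoothness of a pair (f1,f2) at a valency-2 vertex v, f_i given in the
  parameter t_{e_i} of the outgoing edge e_i (so v corresponds to parameter 0).\<close>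
definition smooth_pair :: "nat \<Rightarrow> real \<Rightarrow> (real \<Rightarrow> real) \<Rightarrow> nat \<Rightarrow> real \<Rightarrow> (real \<Rightarrow> real) \<Rightarrow> bool" where
  "smooth_pair w1 l1 f1 w2 l2 f2 \<longleftrightarrow>
     (\<forall>n. real w1 ^ n * nderiv l1 f1 n 0 = (-1) ^ n * real w2 ^ n * nderiv l2 f2 n 0)"

text \<open>A form is encoded by its coefficient functions F e = f_e o t_e on [0, len e]
  for each oriented edge e; canonically F e x = 0 off the edges / off [0, len e].\<close>

type_synonym 'e form = "'e \<Rightarrow> real \<Rightarrow> real"

definition canonical :: "('v, 'e) wmgraph \<Rightarrow> 'e form \<Rightarrow> bool" where
  "canonical G F \<longleftrightarrow> (\<forall>e x. e \<notin> edges G \<or> x \<notin> {0..len G e} \<longrightarrow> F e x = 0)"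

definition A00 :: "('v, 'e) wmgraph \<Rightarrow> 'e form \<Rightarrow> bool" where
  "A00 G F \<longleftrightarrow> canonical G F \<and>
     (\<forall>e\<in>edges G. smooth_cl (len G e) (F e)) \<and>
     (\<forall>e\<in>edges G. \<forall>x\<in>{0..len G e}. F (rev G e) x = F e (len G e - x)) \<and>
     (\<forall>e\<in>edges G. \<forall>e'\<in>edges G. tail G e = tail G e' \<longrightarrow> F e 0 = F e' 0) \<and>
     (\<forall>e\<in>edges G. valency G (tail G e) = 1 \<longrightarrow>
        (\<exists>\<delta>>0. \<forall>x\<in>{0..len G e}. x < \<delta> \<longrightarrow> F e x = F e 0)) \<and>
     (\<forall>v\<in>verts G. \<forall>e1 e2. out_edges G v = {e1, e2} \<and> e1 \<noteq> e2 \<longrightarrow>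
        smooth_pair (wt G e1) (len G e1) (F e1) (wt G e2) (len G e2) (F e2)) \<and>
     (\<forall>v\<in>verts G. valency G v \<ge> 3 \<longrightarrow>
        (\<Sum>e\<in>out_edges G v. real (wt G e) * nderiv (len G e) (F e) 1 0) = 0)"

text \<open>A^{1,0} (coefficients of d't_e) and A^{0,1} (coefficients of d''t_e)
  are given by the same conditions.\<close>
definition A10 :: "('v, 'e) wmgraph \<Rightarrow> 'e form \<Rightarrow> bool" where
  "A10 G F \<longleftrightarrow> canonical G F \<and>
     (\<forall>e\<in>edges G. smooth_cl (len G e) (F e)) \<and>
     (\<forall>e\<in>edges G. \<forall>x\<in>{0..len G e}. F (rev G e) x = - F e (len G e - x)) \<and>
     (\<forall>e\<in>edges G. valency G (tail G e) = 1 \<longrightarrow>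
        (\<exists>\<delta>>0. \<forall>x\<in>{0..len G e}. x < \<delta> \<longrightarrow> F e x = 0)) \<and>
     (\<forall>v\<in>verts G. \<forall>e1 e2. out_edges G v = {e1, e2} \<and> e1 \<noteq> e2 \<longrightarrow>
        smooth_pair (wt G e1) (len G e1) (\<lambda>x. real (wt G e1) * F e1 x)
                    (wt G e2) (len G e2) (\<lambda>x. - real (wt G e2) * F e2 x)) \<and>
     (\<forall>v\<in>verts G. valency G v \<ge> 3 \<longrightarrow>
        (\<Sum>e\<in>out_edges G v. real (wt G e) * F e 0) = 0)"

definition A01 :: "('v, 'e) wmgraph \<Rightarrow> 'e form \<Rightarrow> bool" where
  "A01 G F \<longleftrightarrow> A10 G F"

definition A11 :: "('v, 'e) wmgraph \<Rightarrow> 'e form \<Rightarrow> bool" where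
  "A11 G F \<longleftrightarrow> canonical G F \<and>
     (\<forall>e\<in>edges G. smooth_cl (len G e) (F e)) \<and>
     (\<forall>e\<in>edges G. \<forall>x\<in>{0..len G e}. F (rev G e) x = F e (len G e - x)) \<and>
     (\<forall>e\<in>edges G. valency G (tail G e) = 1 \<longrightarrow>
        (\<exists>\<delta>>0. \<forall>x\<in>{0..len G e}. x < \<delta> \<longrightarrow> F e x = 0)) \<and>
     (\<forall>v\<in>verts G. \<forall>e1 e2. out_edges G v = {e1, e2} \<and> e1 \<noteq> e2 \<longrightarrow>
        smooth_pair (wt G e1) (len G e1) (\<lambda>x. real (wt G e1) ^ 2 * F e1 x)
                    (wt G e2) (len G e2) (\<lambda>x. real (wt G e2) ^ 2 * F e2 x))"

definition dbar0 :: "('v, 'e) wmgraph \<Rightarrow> 'e form \<Rightarrow> 'e form" where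
  "dbar0 G F = (\<lambda>e x. if e \<in> edges G \<and> x \<in> {0..len G e} then nderiv (len G e) (F e) 1 x else 0)"

definition dbar1 :: "('v, 'e) wmgraph \<Rightarrow> 'e form \<Rightarrow> 'e form" where
  "dbar1 G F = (\<lambda>e x. if e \<in> edges G \<and> x \<in> {0..len G e} then - nderiv (len G e) (F e) 1 x else 0)"

definition integral_graph :: "('v, 'e) wmgraph \<Rightarrow> 'e form \<Rightarrow> real" where
  "integral_graph G F = (1/2) * (\<Sum>e\<in>edges G. real (wt G e) * integral {0..len G e} (F e))"

definition wedge :: "'e form \<Rightarrow> 'e form \<Rightarrow> 'e form" where
  "wedge F H = (\<lambda>e x. F e x * H e x)"

definition H00 :: "('v, 'e) wmgraph \<Rightarrow> 'e form set" where
  "H00 G = {F. A00 G F \<and> dbar0 G F = (\<lambda>e x. 0)}"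

definition H10 :: "('v, 'e) wmgraph \<Rightarrow> 'e form set" where
  "H10 G = {F. A10 G F \<and> dbar1 G F = (\<lambda>e x. 0)}"

text \<open>H^{0,1} = A^{0,1} / d''(A^{0,0}) and H^{1,1} = A^{1,1} / d''(A^{1,0}),
  represented by the ambient space together with the subspace divided out.\<close>

definition lin_fun_on :: "'e form set \<Rightarrow> ('e form \<Rightarrow> real) \<Rightarrow> bool" where
  "lin_fun_on S \<phi> \<longleftrightarrow>
     (\<forall>x\<in>S. \<forall>y\<in>S. \<phi> (\<lambda>e t. x e t + y e t) = \<phi> x + \<phi> y) \<and>
     (\<forall>c. \<forall>x\<in>S. \<phi> (\<lambda>e t. c * x e t) = c * \<phi> x)"

text \<open>A bilinear pairing B between K and Y/N (K, Y, N subspaces, N \<subseteq> Y) descends to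
  K x (Y/N) and is perfect: both induced maps K -> (Y/N)^* and Y/N -> K^* are bijective
  onto the full algebraic duals.\<close>
definition perfect_pairing ::
  "'e form set \<Rightarrow> 'e form set \<Rightarrow> 'e form set \<Rightarrow> ('e form \<Rightarrow> 'e form \<Rightarrow> real) \<Rightarrow> bool" where
  "perfect_pairing K Y N B \<longleftrightarrow>
     (\<forall>k\<in>K. \<forall>n\<in>N. B k n = 0) \<and>
     (\<forall>\<phi>. lin_fun_on Y \<phi> \<and> (\<forall>n\<in>N. \<phi> n = 0) \<longrightarrow> (\<exists>!k. k \<in> K \<and> (\<forall>y\<in>Y. B k y = \<phi> y))) \<and>
     (\<forall>\<psi>. lin_fun_on K \<psi> \<longrightarrow> (\<exists>y\<in>Y. \<forall>k\<in>K. B k y = \<psi> k)) \<and>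
     (\<forall>y\<in>Y. \<forall>y'\<in>Y. (\<forall>k\<in>K. B k y = B k y') \<longrightarrow> (\<lambda>e t. y e t - y' e t) \<in> N)"

end

theory Submission
  imports Defs "HOL-Computational_Algebra.Polynomial"
begin

definition psi :: "real \<Rightarrow> real" where
  "psi x = (if x \<le> 0 then 0 else exp (- (1/x)))"

fun Pp :: "nat \<Rightarrow> real poly" where
  "Pp 0 = 1"
| "Pp (Suc n) = [:0,0,1:] * (Pp n - pderiv (Pp n))"

definition Dpsi :: "nat \<Rightarrow> real \<Rightarrow> real" where
  "Dpsi n x = (if x \<le> 0 then 0 else poly (Pp n) (1/x) * exp (- (1/x)))"

lemma poly_exp_lim: "((\<lambda>t. poly p t * exp (-t)) \<longlongrightarrow> (0::real)) at_top"
proof -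
  have "((\<lambda>t. \<Sum>i\<le>degree p. coeff p i * (t ^ i / exp t)) \<longlongrightarrow> (0::real)) at_top"
    by (intro tendsto_null_sum tendsto_mult_right_zero tendsto_power_div_exp_0)
  moreover have "(\<Sum>i\<le>degree p. coeff p i * (t ^ i / exp t)) = poly p t * exp (-t)" for t
  proof -
    have "(\<Sum>i\<le>degree p. coeff p i * (t ^ i / exp t)) = (\<Sum>i\<le>degree p. coeff p i * t ^ i) * inverse (exp t)"
      by (simp add: sum_distrib_right divide_inverse mult.assoc)
    then show ?thesis by (simp add: poly_altdef exp_minus)
  qed
  ultimately show ?thesis by simp
qed

lemma poly_inv_exp_lim: "((\<lambda>x. poly p (1/x) * exp (- (1/x))) \<longlongrightarrow> (0::real)) (at_right 0)"
proof -
  have "((\<lambda>x. poly p (inverse x) * exp (- (inverse x))) \<longlongrightarrow> (0::real)) (at_right 0)"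
    using filterlim_compose[OF poly_exp_lim filterlim_inverse_at_top_right] by (simp add: o_def)
  then show ?thesis by (simp add: inverse_eq_divide)
qed

lemma Dpsi_deriv: "(Dpsi n has_real_derivative Dpsi (Suc n) x) (at x)"
proof (cases "x > 0")
  case True
  have "((\<lambda>y. poly (Pp n) (1/y) * exp (- (1/y))) has_real_derivative
        poly (pderiv (Pp n)) (1/x) * (- (1/x^2)) * exp (- (1/x)) + poly (Pp n) (1/x) * (exp (- (1/x)) * (1/x^2))) (at x)"
    using True
    by (auto intro!: derivative_eq_intros DERIV_chain2[OF poly_DERIV] simp: power2_eq_square field_simps)
  moreover have "poly (pderiv (Pp n)) (1/x) * (- (1/x^2)) * exp (- (1/x)) + poly (Pp n) (1/x) * (exp (- (1/x)) * (1/x^2))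
     = Dpsi (Suc n) x"
    using True by (simp add: Dpsi_def algebra_simps power2_eq_square)
  ultimately have "((\<lambda>y. poly (Pp n) (1/y) * exp (- (1/y))) has_real_derivative Dpsi (Suc n) x) (at x)"
    by simp
  then show ?thesis
    by (rule has_field_derivative_transform_within_open[where S="{0<..}"]) (use True in \<open>auto simp: Dpsi_def\<close>)
next
  case False
  note F = False
  show ?thesis
  proof (cases "x < 0")
    case True
    have "((\<lambda>y. 0) has_real_derivative 0) (at x)" by simp
    then have "(Dpsi n has_real_derivative 0) (at x)"
      by (rule has_field_derivative_transform_within_open[where S="{..<0}"]) (use True in \<open>auto simp: Dpsi_def\<close>)
    then show ?thesis using True by (simp add: Dpsi_def)
  next
    case False
    then have x0: "x = 0" using F by simp
    have L: "((\<lambda>y. (Dpsi n y - Dpsi n 0) / (y - 0)) \<longlongrightarrow> 0) (at_left 0)"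
    proof -
      have "eventually (\<lambda>y. (Dpsi n y - Dpsi n 0) / (y - 0) = 0) (at_left (0::real))"
        unfolding eventually_at_left_field by (rule exI[of _ "-1"]) (auto simp: Dpsi_def)
      then show ?thesis by (rule tendsto_eventually)
    qed
    have R: "((\<lambda>y. (Dpsi n y - Dpsi n 0) / (y - 0)) \<longlongrightarrow> 0) (at_right 0)"
    proof -
      have "eventually (\<lambda>y. poly ([:0,1:] * Pp n) (1/y) * exp (- (1/y)) = (Dpsi n y - Dpsi n 0) / (y - 0)) (at_right (0::real))"
        unfolding eventually_at_right_field by (rule exI[of _ "1"]) (auto simp: Dpsi_def)
      then show ?thesis by (rule Lim_transform_eventually[OF poly_inv_exp_lim])
    qed
    have "((\<lambda>y. (Dpsi n y - Dpsi n 0) / (y - 0)) \<longlongrightarrow> 0) (at 0)"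
      using L R by (rule filterlim_split_at)
    then show ?thesis using x0 by (simp add: has_field_derivative_iff Dpsi_def)
  qed
qed

lemma Dpsi_0: "Dpsi 0 = psi"
  by (auto simp: Dpsi_def psi_def fun_eq_iff)

definition gsm :: "(nat \<Rightarrow> real \<Rightarrow> real) \<Rightarrow> bool" where
  "gsm D \<longleftrightarrow> (\<forall>n x. (D n has_real_derivative D (Suc n) x) (at x))"

lemma gsm_Dpsi: "gsm Dpsi"
  using Dpsi_deriv by (simp add: gsm_def)

lemma gsm_affine:
  assumes "gsm D"
  shows "gsm (\<lambda>n x. c ^ n * D n (c * x + d))"
  unfolding gsm_def
proof (intro allI)
  fix n x
  have "((\<lambda>x. D n (c * x + d)) has_real_derivative D (Suc n) (c * x + d) * c) (at x)"
    using assms unfolding gsm_def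
    by (auto intro!: derivative_eq_intros DERIV_chain2[where f="D n"])
  then show "((\<lambda>x. c ^ n * D n (c * x + d)) has_real_derivative c ^ Suc n * D (Suc n) (c * x + d)) (at x)"
    by (auto intro!: derivative_eq_intros simp: algebra_simps)
qed

lemma Suc_choose': "Suc n choose k = (n choose k) + (if k = 0 then 0 else (n choose (k-1)))"
  by (cases k) simp_all

lemma gsm_mult:
  assumes F: "gsm F" and G: "gsm G"
  shows "gsm (\<lambda>n x. \<Sum>i = 0..n. real (n choose i) * F i x * G (n-i) x)"
  unfolding gsm_def
proof (intro allI)
  fix n x
  have sumeq: "(\<Sum>i = 0..n.
               real (n choose i) * (F (Suc i) x * G (n-i) x + F i x * G (Suc (n-i)) x)) =
            (\<Sum>i = 0..Suc n. real (Suc n choose i) * F i x * G (Suc n - i) x)"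
  proof -
    have A: "(\<Sum>i = 0..Suc n. real (Suc n choose i) * F i x * G (Suc n - i) x) =
       (\<Sum>i = 0..Suc n. real (n choose i) * F i x * G (Suc n - i) x) +
       (\<Sum>i = 0..Suc n. real (if i = 0 then 0 else n choose (i - 1)) * F i x * G (Suc n - i) x)"
      by (simp add: Suc_choose' sum.distrib[symmetric] algebra_simps)
    have B: "(\<Sum>i = 0..Suc n. real (n choose i) * F i x * G (Suc n - i) x) =
       (\<Sum>i = 0..n. real (n choose i) * F i x * G (Suc (n - i)) x)"
      by (simp add: Suc_diff_le)
    have C: "(\<Sum>i = 0..Suc n. real (if i = 0 then 0 else n choose (i - 1)) * F i x * G (Suc n - i) x) =
       (\<Sum>i = 0..n. real (n choose i) * F (Suc i) x * G (n - i) x)"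
      by (subst sum.atLeast0_atMost_Suc_shift) simp
    show ?thesis unfolding A B C by (simp add: sum.distrib algebra_simps)
  qed
  have "((\<lambda>x. \<Sum>i = 0..n. real (n choose i) * F i x * G (n-i) x) has_real_derivative
     (\<Sum>i = 0..n. real (n choose i) * (F (Suc i) x * G (n-i) x + F i x * G (Suc (n-i)) x))) (at x)"
    using F G unfolding gsm_def
    by (auto intro!: derivative_eq_intros DERIV_sum simp: algebra_simps)
  then show "((\<lambda>x. \<Sum>i = 0..n. real (n choose i) * F i x * G (n-i) x) has_real_derivative
     (\<Sum>i = 0..Suc n. real (Suc n choose i) * F i x * G (Suc n - i) x)) (at x)"
    using sumeq by simp
qed

lemma ds_unique:
  assumes l: "0 < l" and D1: "deriv_seq l f D1" and D2: "deriv_seq l f D2"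
  shows "x \<in> {0..l} \<Longrightarrow> D1 n x = D2 n x"
proof (induction n arbitrary: x)
  case 0 then show ?case using D1 D2 by (simp add: deriv_seq_def)
next
  case (Suc n)
  have d1: "(D1 n has_real_derivative D1 (Suc n) x) (at x within {0..l})"
    using D1 Suc.prems by (simp add: deriv_seq_def)
  have d1': "(D2 n has_real_derivative D1 (Suc n) x) (at x within {0..l})"
    by (rule has_field_derivative_transform_within[OF d1, of 1]) (use Suc in auto)
  have d2: "(D2 n has_real_derivative D2 (Suc n) x) (at x within {0..l})"
    using D2 Suc.prems by (simp add: deriv_seq_def)
  show ?case
    using vector_derivative_unique_within_closed_interval[of 0 l x "D2 n" "D1 (Suc n) x" "D2 (Suc n) x"]
      d1' d2 l Suc.prems by (simp add: has_real_derivative_iff_has_vector_derivative)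
qed

lemma nderiv_eq:
  assumes "0 < l" "deriv_seq l f D" "x \<in> {0..l}"
  shows "nderiv l f n x = D n x"
proof -
  have "deriv_seq l f (SOME D. deriv_seq l f D)" using assms(2) by (metis someI_ex)
  then show ?thesis unfolding nderiv_def using ds_unique[OF assms(1) _ assms(2) assms(3)] by blast
qed

lemma ds_cong_iff:
  assumes "\<And>x. x \<in> {0..l} \<Longrightarrow> f x = g x"
  shows "deriv_seq l f = deriv_seq l g"
  using assms by (auto simp: deriv_seq_def fun_eq_iff)

lemma nderiv_cong:
  assumes "\<And>x. x \<in> {0..l} \<Longrightarrow> f x = g x"
  shows "nderiv l f = nderiv l g"
  using ds_cong_iff[OF assms] by (simp add: nderiv_def fun_eq_iff)

lemma smooth_cl_cong:
  assumes "\<And>x. x \<in> {0..l} \<Longrightarrow> f x = g x"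
  shows "smooth_cl l f = smooth_cl l g"
  using ds_cong_iff[OF assms] by (simp add: smooth_cl_def)

lemma ds_lin:
  assumes "deriv_seq l f Df" "deriv_seq l g Dg"
  shows "deriv_seq l (\<lambda>x. a * f x + b * g x) (\<lambda>n x. a * Df n x + b * Dg n x)"
  using assms unfolding deriv_seq_def
  by (auto intro!: derivative_eq_intros)

lemma ds_const: "deriv_seq l (\<lambda>x. c) (\<lambda>n x. if n = 0 then c else 0)"
  unfolding deriv_seq_def by (auto intro!: derivative_eq_intros)

lemma ds_cont: "deriv_seq l f D \<Longrightarrow> continuous_on {0..l} f"
proof -
  assume D: "deriv_seq l f D"
  then have "continuous_on {0..l} (D 0)"
    unfolding deriv_seq_def by (intro DERIV_continuous_on) blast
  then show ?thesis
    by (rule continuous_on_eq) (use D in \<open>simp add: deriv_seq_def\<close>)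
qed

lemma ds_prim:
  assumes D: "deriv_seq l f D"
  shows "deriv_seq l (\<lambda>x. c + integral {0..x} f)
          (\<lambda>n x. if n = 0 then c + integral {0..x} f else D (n - 1) x)"
  unfolding deriv_seq_def
proof (intro conjI ballI allI)
  fix n x assume x: "x \<in> {0..l}"
  show "((\<lambda>x. if n = 0 then c + integral {0..x} f else D (n - 1) x) has_real_derivative
          (if Suc n = 0 then c + integral {0..x} f else D (Suc n - 1) x)) (at x within {0..l})"
  proof (cases n)
    case 0
    have "((\<lambda>x. integral {0..x} f) has_real_derivative f x) (at x within {0..l})"
      using integral_has_real_derivative[OF ds_cont[OF D] x] .
    then have "((\<lambda>x. c + integral {0..x} f) has_real_derivative f x) (at x within {0..l})"
      by (auto intro!: derivative_eq_intros)
    then show ?thesis using 0 D x by (simp add: deriv_seq_def)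
  next
    case (Suc m)
    then show ?thesis using D x by (simp add: deriv_seq_def)
  qed
qed simp

lemma ds_gsm: "gsm D \<Longrightarrow> deriv_seq l (D 0) D"
  unfolding gsm_def deriv_seq_def by (auto intro: has_field_derivative_at_within)

lemma smooth_nderiv0: "0 < l \<Longrightarrow> smooth_cl l f \<Longrightarrow> x \<in> {0..l} \<Longrightarrow> nderiv l f 0 x = f x"
  unfolding smooth_cl_def using nderiv_eq by (fastforce simp: deriv_seq_def)

lemma smooth_ds: "0 < l \<Longrightarrow> smooth_cl l f \<Longrightarrow> deriv_seq l f (nderiv l f)"
  unfolding smooth_cl_def nderiv_def by (metis someI)

lemma smooth_deriv: "0 < l \<Longrightarrow> smooth_cl l f \<Longrightarrow> x \<in> {0..l} \<Longrightarrow>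
   (f has_real_derivative nderiv l f 1 x) (at x within {0..l})"
proof -
  assume a: "0 < l" "smooth_cl l f" "x \<in> {0..l}"
  have ds: "deriv_seq l f (nderiv l f)" using smooth_ds a by blast
  then have "(nderiv l f 0 has_real_derivative nderiv l f 1 x) (at x within {0..l})"
    using a unfolding deriv_seq_def by auto
  then show ?thesis
    by (rule has_field_derivative_transform_within[of _ _ _ _ 1]) (use ds a in \<open>auto simp: deriv_seq_def\<close>)
qed

lemma nderiv_lin:
  assumes "0 < l" "smooth_cl l f" "smooth_cl l g" "x \<in> {0..l}"
  shows "nderiv l (\<lambda>x. a * f x + b * g x) n x = a * nderiv l f n x + b * nderiv l g n x"
  using nderiv_eq[OF assms(1) ds_lin[OF smooth_ds[OF assms(1,2)] smooth_ds[OF assms(1,3)]] assms(4)] .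

lemma smooth_lin:
  assumes "0 < l" "smooth_cl l f" "smooth_cl l g"
  shows "smooth_cl l (\<lambda>x. a * f x + b * g x)"
  using ds_lin[OF smooth_ds[OF assms(1,2)] smooth_ds[OF assms(1,3)]] smooth_cl_def by blast

lemma nderiv_scale:
  assumes "0 < l" "smooth_cl l f" "x \<in> {0..l}"
  shows "nderiv l (\<lambda>x. a * f x) n x = a * nderiv l f n x"
  using nderiv_lin[OF assms(1,2,2,3), of a 0 n] by simp

lemma smooth_scale: "0 < l \<Longrightarrow> smooth_cl l f \<Longrightarrow> smooth_cl l (\<lambda>x. a * f x)"
  using smooth_lin[of l f f a 0] by simp

lemma nderiv_const: "0 < l \<Longrightarrow> x \<in> {0..l} \<Longrightarrow> nderiv l (\<lambda>x. c) n x = (if n = 0 then c else 0)"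
  using nderiv_eq[OF _ ds_const] by blast

lemma smooth_const: "smooth_cl l (\<lambda>x. c)"
  using ds_const smooth_cl_def by blast

lemma deriv_zero_const:
  assumes "0 < l" "smooth_cl l f" "\<And>x. x \<in> {0..l} \<Longrightarrow> nderiv l f 1 x = 0" "x \<in> {0..l}"
  shows "f x = f 0"
proof -
  have "\<exists>c. \<forall>x\<in>{0..l}. f x = c"
    by (rule has_field_derivative_zero_constant) (use smooth_deriv[OF assms(1,2)] assms(3) in auto)
  then show ?thesis using assms by force
qed

lemma ftc_smooth:
  assumes "0 < l" "smooth_cl l f"
  shows "integral {0..l} (nderiv l f 1) = f l - f 0"
proof -
  have "(nderiv l f 1 has_integral (f l - f 0)) {0..l}"
    by (rule fundamental_theorem_of_calculus)
       (use assms smooth_deriv in \<open>auto simp: has_real_derivative_iff_has_vector_derivative\<close>)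
  then show ?thesis by blast
qed

definition Fb :: "real \<Rightarrow> nat \<Rightarrow> real \<Rightarrow> real" where
  "Fb l n x = Dpsi n (x - l/3)"
definition Gb :: "real \<Rightarrow> nat \<Rightarrow> real \<Rightarrow> real" where
  "Gb l n x = (-1)^n * Dpsi n (2*l/3 - x)"
definition Db :: "real \<Rightarrow> nat \<Rightarrow> real \<Rightarrow> real" where
  "Db l n x = (\<Sum>i = 0..n. real (n choose i) * Fb l i x * Gb l (n-i) x)"

lemma gsm_Fb: "gsm (Fb l)"
proof -
  have "gsm (\<lambda>n x. 1 ^ n * Dpsi n (1 * x + - (l/3)))" by (rule gsm_affine[OF gsm_Dpsi])
  then show ?thesis by (simp add: Fb_def[abs_def])
qed

lemma gsm_Gb: "gsm (Gb l)"
proof -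
  have "gsm (\<lambda>n x. (-1) ^ n * Dpsi n ((-1) * x + 2*l/3))" by (rule gsm_affine[OF gsm_Dpsi])
  then show ?thesis by (simp add: Gb_def[abs_def])
qed

lemma gsm_Db: "gsm (Db l)"
  unfolding Db_def[abs_def] by (rule gsm_mult[OF gsm_Fb gsm_Gb])

lemma Dpsi_nonpos: "y \<le> 0 \<Longrightarrow> Dpsi n y = 0"
  by (simp add: Dpsi_def)

lemma Db_zero: "x \<le> l/3 \<or> 2*l/3 \<le> x \<Longrightarrow> Db l n x = 0"
  by (auto simp: Db_def Fb_def Gb_def Dpsi_nonpos intro!: sum.neutral)

lemma Db0: "Db l 0 x = psi (x - l/3) * psi (2*l/3 - x)"
  by (simp add: Db_def Fb_def Gb_def Dpsi_0)

lemma Db_sym: "Db l 0 (l - x) = Db l 0 x"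
  by (simp add: Db0 algebra_simps)

lemma psi_nonneg: "0 \<le> psi x" by (simp add: psi_def)

lemma Db_nonneg: "0 \<le> Db l 0 x"
  by (simp add: Db0 psi_nonneg)

lemma Db_cont: "continuous_on S (Db l 0)"
  using gsm_Db[of l] unfolding gsm_def
  by (intro DERIV_continuous_on[of S _ "\<lambda>x. Db l 1 x"]) (auto intro: has_field_derivative_at_within)

definition Ib :: "real \<Rightarrow> real" where "Ib l = integral {0..l} (Db l 0)"

lemma Ib_pos: assumes l: "0 < l" shows "0 < Ib l"
proof -
  have ge: "0 \<le> Ib l" unfolding Ib_def
    by (rule integral_nonneg) (auto intro: integrable_continuous_interval Db_cont Db_nonneg)
  have pos: "Db l 0 (l/2) \<noteq> 0" using l by (simp add: Db0 psi_def)
  have "integral (cbox 0 l) (Db l 0) = 0 \<longleftrightarrow> (\<forall>x \<in> cbox 0 l. Db l 0 x = 0)"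
    by (rule integral_cbox_eq_0_iff) (use l in \<open>auto simp: Db_cont Db_nonneg\<close>)
  then have "Ib l \<noteq> 0" using pos l by (auto simp: Ib_def cbox_interval)
  then show ?thesis using ge by simp
qed

definition bn :: "real \<Rightarrow> real \<Rightarrow> real" where "bn l x = Db l 0 x / Ib l"

lemma ds_bn: "deriv_seq l (bn l) (\<lambda>n x. Db l n x / Ib l)"
proof -
  have "deriv_seq l (\<lambda>x. (1 / Ib l) * Db l 0 x + 0 * Db l 0 x) (\<lambda>n x. (1 / Ib l) * Db l n x + 0 * Db l n x)"
    by (rule ds_lin[OF ds_gsm[OF gsm_Db] ds_gsm[OF gsm_Db]])
  then show ?thesis by (simp add: bn_def[abs_def])
qed

lemma smooth_bn: "smooth_cl l (bn l)"
  using ds_bn smooth_cl_def by blast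

lemma nderiv_bn0: "0 < l \<Longrightarrow> nderiv l (bn l) n 0 = 0"
  using nderiv_eq[OF _ ds_bn, of l 0 n] by (simp add: Db_zero)

lemma bn_small: "0 < l \<Longrightarrow> x < l/3 \<Longrightarrow> bn l x = 0"
  by (simp add: bn_def Db_zero)

lemma bn_sym: "bn l (l - x) = bn l x"
  by (simp add: bn_def Db_sym)

lemma int_bn: "0 < l \<Longrightarrow> integral {0..l} (bn l) = 1"
proof -
  assume l: "0 < l"
  have "integral {0..l} (bn l) = integral {0..l} (Db l 0) / Ib l"
    unfolding bn_def[abs_def] by (rule integral_divide)
  then show ?thesis using Ib_pos[OF l] by (simp add: Ib_def)
qed

lemma cont_bn: "continuous_on S (bn l)"
  unfolding bn_def[abs_def] divide_inverse by (intro continuous_on_mult_right Db_cont)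

definition ip :: "'x set \<Rightarrow> ('x \<Rightarrow> real) \<Rightarrow> ('x \<Rightarrow> real) \<Rightarrow> real" where
  "ip S a b = (\<Sum>s\<in>S. a s * b s)"

lemma ip_sym: "ip S a b = ip S b a" by (simp add: ip_def mult.commute)

lemma ip_diff_left: "ip S (\<lambda>s. a s - b s) c = ip S a c - ip S b c"
  by (simp add: ip_def left_diff_distrib sum_subtractf)

lemma ip_scale_left: "ip S (\<lambda>s. t * a s) c = t * ip S a c"
  by (simp add: ip_def sum_distrib_left mult.assoc)

lemma ip_add_right: "ip S a (\<lambda>s. b s + c s) = ip S a b + ip S a c"
  by (simp add: ip_def distrib_left sum.distrib)

lemma ip_sum_left: "ip S (\<lambda>s. \<Sum>i\<in>K. c i * u i s) b = (\<Sum>i\<in>K. c i * ip S (u i) b)"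
  by (simp add: ip_def sum_distrib_right sum_distrib_left mult.assoc sum.swap[of _ S])

lemma ip_sum_right: "ip S b (\<lambda>s. \<Sum>i\<in>K. c i * u i s) = (\<Sum>i\<in>K. c i * ip S b (u i))"
  using ip_sum_left[of S c u K b] by (simp add: ip_sym)

lemma ip_self_zero: "finite S \<Longrightarrow> ip S a a = 0 \<Longrightarrow> s \<in> S \<Longrightarrow> a s = 0"
  unfolding ip_def using sum_nonneg_eq_0_iff[of S "\<lambda>s. a s * a s"] by auto

lemma ip_cong: "(\<And>s. s \<in> S \<Longrightarrow> a s = a' s) \<Longrightarrow> (\<And>s. s \<in> S \<Longrightarrow> b s = b' s) \<Longrightarrow> ip S a b = ip S a' b'"
  by (simp add: ip_def)

lemma gs_decomp:
  fixes u :: "'i \<Rightarrow> 'x \<Rightarrow> real"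
  assumes S: "finite S" and K: "finite K"
  shows "\<exists>c. \<forall>j\<in>K. ip S (\<lambda>s. x s - (\<Sum>i\<in>K. c i * u i s)) (u j) = 0"
  using K
proof (induction K arbitrary: x rule: finite_induct)
  case empty then show ?case by simp
next
  case (insert k K)
  obtain d where d: "\<And>j. j \<in> K \<Longrightarrow> ip S (\<lambda>s. u k s - (\<Sum>i\<in>K. d i * u i s)) (u j) = 0"
    using insert.IH[of "u k"] by blast
  define v where "v = (\<lambda>s. u k s - (\<Sum>i\<in>K. d i * u i s))"
  have vK: "ip S v (u j) = 0" if "j \<in> K" for j using d[OF that] by (simp add: v_def)
  have uk: "u k s = v s + (\<Sum>i\<in>K. d i * u i s)" for s by (simp add: v_def)
  show ?case
  proof (cases "ip S v v = 0")
    case True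
    then have v0: "\<And>s. s \<in> S \<Longrightarrow> v s = 0" using ip_self_zero[OF S] by blast
    obtain c where c: "\<And>j. j \<in> K \<Longrightarrow> ip S (\<lambda>s. x s - (\<Sum>i\<in>K. c i * u i s)) (u j) = 0"
      using insert.IH[of x] by blast
    define c' where "c' = c(k := 0)"
    have sum': "(\<Sum>i\<in>insert k K. c' i * u i s) = (\<Sum>i\<in>K. c i * u i s)" for s
      using insert.hyps by (simp add: c'_def) (rule sum.cong, auto)
    define z where "z = (\<lambda>s. x s - (\<Sum>i\<in>K. c i * u i s))"
    have zk: "ip S z (u k) = 0"
    proof -
      have "ip S z (u k) = ip S z (\<lambda>s. \<Sum>i\<in>K. d i * u i s)"
        by (rule ip_cong) (auto simp: uk v0)
      also have "\<dots> = 0" using c by (simp add: ip_sum_right z_def)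
      finally show ?thesis .
    qed
    show ?thesis
      by (rule exI[of _ c'], unfold sum') (use c zk in \<open>auto simp: z_def\<close>)
  next
    case False
    define t where "t = ip S x v / ip S v v"
    obtain c where c: "\<And>j. j \<in> K \<Longrightarrow> ip S (\<lambda>s. (x s - t * v s) - (\<Sum>i\<in>K. c i * u i s)) (u j) = 0"
      using insert.IH[of "\<lambda>s. x s - t * v s"] by blast
    define z where "z = (\<lambda>s. (x s - t * v s) - (\<Sum>i\<in>K. c i * u i s))"
    have zv: "ip S z v = 0"
    proof -
      have "ip S z v = ip S x v - t * ip S v v - (\<Sum>i\<in>K. c i * ip S (u i) v)"
        unfolding z_def ip_diff_left ip_scale_left ip_sum_left by simp
      also have "(\<Sum>i\<in>K. c i * ip S (u i) v) = 0"
        using vK by (simp add: ip_sym)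
      finally show ?thesis using False by (simp add: t_def)
    qed
    have zk: "ip S z (u k) = 0"
    proof -
      have "ip S z (u k) = ip S z (\<lambda>s. v s + (\<Sum>i\<in>K. d i * u i s))"
        by (rule ip_cong) (simp_all only: uk)
      also have "\<dots> = ip S z v + (\<Sum>i\<in>K. d i * ip S z (u i))"
        by (simp only: ip_add_right ip_sum_right)
      also have "\<dots> = 0" using zv c by (simp add: z_def)
      finally show ?thesis .
    qed
    define c' where "c' = (\<lambda>i. c i - t * d i)(k := t)"
    have sum': "x s - (\<Sum>i\<in>insert k K. c' i * u i s) = z s" for s
    proof -
      have "(\<Sum>i\<in>insert k K. c' i * u i s) = t * u k s + (\<Sum>i\<in>K. (c i - t * d i) * u i s)"
        using insert.hyps by (simp add: c'_def) (rule sum.cong, auto)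
      also have "\<dots> = t * v s + (\<Sum>i\<in>K. c i * u i s)"
        by (simp add: uk algebra_simps sum_subtractf sum_distrib_left)
      finally show ?thesis by (simp add: z_def)
    qed
    show ?thesis
      by (rule exI[of _ c'], unfold sum') (use c zk in \<open>auto simp: z_def\<close>)
  qed
qed

locale wg =
  fixes G :: "('v, 'e) wmgraph"
  assumes wmg: "wmg G"
begin

abbreviation "EE \<equiv> edges G"
abbreviation "VV \<equiv> verts G"
abbreviation "rE \<equiv> rev G"
abbreviation "tE \<equiv> tail G"
abbreviation "hE \<equiv> head G"
abbreviation "lE \<equiv> len G"
abbreviation "wE e \<equiv> real (wt G e)"
abbreviation "out v \<equiv> out_edges G v"

lemma fin: "finite VV" "finite EE"
  using wmg by (auto simp: wmg_def)

lemma edge: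
  assumes "e \<in> EE"
  shows "rE e \<in> EE" "rE (rE e) = e" "rE e \<noteq> e" "tE e \<in> VV" "hE e \<in> VV" "hE e \<noteq> tE e"
    "0 < lE e" "lE (rE e) = lE e" "0 < wE e" "wE (rE e) = wE e"
    "tE (rE e) = hE e" "hE (rE e) = tE e"
  using wmg assms by (auto simp: wmg_def head_def)

lemma rE_eq: "x \<in> EE \<Longrightarrow> y \<in> EE \<Longrightarrow> rE x = y \<longleftrightarrow> x = rE y"
  using edge(2)[of x] edge(2)[of y] by auto

lemma bij_rE: "bij_betw rE EE EE"
  by (rule bij_betw_byWitness[of _ rE]) (use edge(1,2) in blast)+

lemma sum_rev: "(\<Sum>e\<in>EE. f (rE e)) = (\<Sum>e\<in>EE. f e)"
  using sum.reindex_bij_betw[OF bij_rE, of f] .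

lemma out_def': "out v = {e \<in> EE. tE e = v}"
  by (simp add: out_edges_def)

lemma sum_group_tail: "(\<Sum>e\<in>EE. (f::'e\<Rightarrow>real) e * a (tE e)) = (\<Sum>v\<in>VV. a v * (\<Sum>e\<in>out v. f e))"
proof -
  have "(\<Sum>e\<in>EE. f e * a (tE e)) = (\<Sum>v\<in>VV. \<Sum>e\<in>{x \<in> EE. tE x = v}. f e * a (tE e))"
  proof -
    have img: "tE ` EE \<subseteq> VV" using edge(4) by blast
    show ?thesis by (rule sum.group[OF fin(2) fin(1) img, symmetric])
  qed
  also have "\<dots> = (\<Sum>v\<in>VV. a v * (\<Sum>e\<in>out v. f e))"
  proof (rule sum.cong)
    fix v assume "v \<in> VV"
    have "(\<Sum>e\<in>{x \<in> EE. tE x = v}. f e * a (tE e)) = (\<Sum>e\<in>out v. f e * a v)"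
      by (simp add: out_def')
    also have "\<dots> = a v * (\<Sum>e\<in>out v. f e)"
      by (simp add: sum_distrib_left mult.commute)
    finally show "(\<Sum>e\<in>{x \<in> EE. tE x = v}. f e * a (tE e)) = a v * (\<Sum>e\<in>out v. f e)" .
  qed simp
  finally show ?thesis .
qed

definition divf :: "('e \<Rightarrow> real) \<Rightarrow> 'v \<Rightarrow> real" where
  "divf h v = (\<Sum>e\<in>out v. h e)"
definition gradf :: "('v \<Rightarrow> real) \<Rightarrow> 'e \<Rightarrow> real" where
  "gradf a e = a (hE e) - a (tE e)"
definition de :: "'e \<Rightarrow> 'e \<Rightarrow> real" where
  "de e x = (if x = e then 1 else 0) - (if x = rE e then 1 else 0)"
definition dlt :: "'v \<Rightarrow> 'v \<Rightarrow> real" where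
  "dlt v u = (if u = v then 1 else 0)"
definition LC :: "('v \<Rightarrow> real) \<Rightarrow> bool" where
  "LC a \<longleftrightarrow> (\<forall>e\<in>EE. a (tE e) = a (hE e))"
definition Anti :: "('e \<Rightarrow> real) \<Rightarrow> bool" where
  "Anti h \<longleftrightarrow> (\<forall>e\<in>EE. h (rE e) = - h e)"
definition Circ :: "('e \<Rightarrow> real) \<Rightarrow> bool" where
  "Circ h \<longleftrightarrow> Anti h \<and> (\<forall>v\<in>VV. divf h v = 0)"

lemma sum_if_eq: "x \<in> EE \<Longrightarrow> (\<Sum>e\<in>EE. (f::'e\<Rightarrow>real) e * (if x = e then 1 else 0)) = f x"
proof -
  assume x: "x \<in> EE"
  have "(\<Sum>e\<in>EE. f e * (if x = e then 1 else 0)) = (\<Sum>e\<in>EE. if x = e then f e else 0)"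
    by (rule sum.cong) auto
  then show ?thesis using x fin by simp
qed

lemma sum_if_rev: "x \<in> EE \<Longrightarrow> (\<Sum>e\<in>EE. (f::'e\<Rightarrow>real) e * (if x = rE e then 1 else 0)) = f (rE x)"
proof -
  assume x: "x \<in> EE"
  have "(\<Sum>e\<in>EE. f e * (if x = rE e then 1 else 0)) = (\<Sum>e\<in>EE. f e * (if rE x = e then 1 else 0))"
    by (rule sum.cong) (use x rE_eq in auto)
  also have "\<dots> = f (rE x)" using sum_if_eq edge x by blast
  finally show ?thesis .
qed

lemma sum_de: "x \<in> EE \<Longrightarrow> (\<Sum>e\<in>EE. (f::'e\<Rightarrow>real) e * de e x) = f x - f (rE x)"
  by (simp add: de_def right_diff_distrib sum_subtractf sum_if_eq sum_if_rev)

lemma sum_de_anti: "Anti h \<Longrightarrow> x \<in> EE \<Longrightarrow> (\<Sum>e\<in>EE. h e / 2 * de e x) = h x"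
  using sum_de[of x "\<lambda>e. h e / 2"] by (simp add: Anti_def)

lemma de_anti: "i \<in> EE \<Longrightarrow> x \<in> EE \<Longrightarrow> de i (rE x) = - de i x"
  unfolding de_def using rE_eq[of x i] rE_eq[of x "rE i"] edge[of i] edge[of x]
  by (auto)

lemma ip_div_de:
  assumes e: "e \<in> EE"
  shows "ip VV a (divf (de e)) = a (tE e) - a (hE e)"
proof -
  have "ip VV a (divf (de e)) = (\<Sum>v\<in>VV. a v * (\<Sum>x\<in>out v. de e x))"
    by (simp add: ip_def divf_def)
  also have "\<dots> = (\<Sum>x\<in>EE. de e x * a (tE x))"
    by (rule sum_group_tail[symmetric])
  also have "\<dots> = (\<Sum>x\<in>EE. a (tE x) * (if e = x then 1 else 0)) - (\<Sum>x\<in>EE. a (tE x) * (if rE e = x then 1 else 0))"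
    by (simp add: de_def algebra_simps sum_subtractf eq_commute)
  also have "\<dots> = a (tE e) - a (hE e)"
    using sum_if_eq[OF e, of "\<lambda>x. a (tE x)"] sum_if_eq[OF edge(1)[OF e], of "\<lambda>x. a (tE x)"] edge[OF e]
    by simp
  finally show ?thesis .
qed

lemma sum_tail_delta: "(\<Sum>e\<in>EE. z e * dlt v (tE e)) = divf z v"
  using fin by (simp add: dlt_def divf_def out_def' sum.inter_filter if_distrib[of "\<lambda>t. _ * t"] cong: if_cong)

lemma ip_grad:
  assumes "Anti z"
  shows "ip EE z (gradf a) = -2 * (\<Sum>e\<in>EE. z e * a (tE e))"
proof -
  have "(\<Sum>e\<in>EE. z e * a (hE e)) = (\<Sum>e\<in>EE. z (rE e) * a (tE e))"
    using sum_rev[of "\<lambda>e. z (rE e) * a (tE e)"] by (auto simp: edge intro: sum.cong)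
  also have "\<dots> = - (\<Sum>e\<in>EE. z e * a (tE e))"
    using assms by (simp add: Anti_def sum_negf[symmetric])
  finally have "(\<Sum>e\<in>EE. z e * a (hE e)) = - (\<Sum>e\<in>EE. z e * a (tE e))" .
  then show ?thesis by (simp add: ip_def gradf_def right_diff_distrib sum_subtractf)
qed

lemma ip_grad_dlt: "Anti z \<Longrightarrow> ip EE z (gradf (dlt v)) = -2 * divf z v"
  by (simp add: ip_grad sum_tail_delta)

lemma gradf_anti: "Anti (gradf a)"
  by (simp add: Anti_def gradf_def edge)

lemma divf_lin: "divf (\<lambda>x. \<Sum>i\<in>I. c i * f i x) v = (\<Sum>i\<in>I. c i * divf (f i) v)"
  by (simp add: divf_def sum_distrib_left sum.swap[of _ "out v"])

lemma LA1:
  assumes hyp: "\<And>a. LC a \<Longrightarrow> ip VV t a = 0"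
  shows "\<exists>h. Anti h \<and> (\<forall>v\<in>VV. divf h v = t v)"
proof -
  have "\<exists>c. \<forall>j\<in>EE. ip VV (\<lambda>s. t s - (\<Sum>i\<in>EE. c i * divf (de i) s)) (divf (de j)) = 0"
    using gs_decomp[OF fin(1) fin(2), of t "\<lambda>i. divf (de i)"] by simp
  then obtain c where c: "\<And>j. j \<in> EE \<Longrightarrow> ip VV (\<lambda>s. t s - (\<Sum>i\<in>EE. c i * divf (de i) s)) (divf (de j)) = 0"
    by blast
  define z where "z = (\<lambda>s. t s - (\<Sum>i\<in>EE. c i * divf (de i) s))"
  have zLC: "LC z" unfolding LC_def
  proof
    fix e assume e: "e \<in> EE"
    have "ip VV z (divf (de e)) = 0" using c[OF e] by (simp only: z_def)
    then show "z (tE e) = z (hE e)" using ip_div_de[OF e, of z] by simp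
  qed
  have "ip VV z z = ip VV t z - ip VV (\<lambda>s. \<Sum>i\<in>EE. c i * divf (de i) s) z"
    unfolding z_def[of] by (rule ip_diff_left)
  also have "ip VV t z = 0" using hyp[OF zLC] .
  also have "ip VV (\<lambda>s. \<Sum>i\<in>EE. c i * divf (de i) s) z = 0"
  proof -
    have "ip VV (divf (de i)) z = 0" if i: "i \<in> EE" for i
      using ip_div_de[OF i, of z] zLC i by (simp add: ip_sym[of VV "divf (de i)" z] LC_def)
    then show ?thesis unfolding ip_sum_left by simp
  qed
  finally have "ip VV z z = 0" by simp
  then have z0: "\<And>s. s \<in> VV \<Longrightarrow> z s = 0" using ip_self_zero[OF fin(1)] by blast
  define h where "h = (\<lambda>x. \<Sum>i\<in>EE. c i * de i x)"
  have "Anti h" unfolding Anti_def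
  proof
    fix x assume x: "x \<in> EE"
    have "h (rE x) = (\<Sum>i\<in>EE. - (c i * de i x))"
      unfolding h_def by (rule sum.cong) (simp_all add: de_anti x)
    then show "h (rE x) = - h x" by (simp add: sum_negf h_def)
  qed
  moreover have "divf h v = t v" if "v \<in> VV" for v
    using z0[OF that] by (simp add: h_def divf_lin z_def)
  ultimately show ?thesis by blast
qed

lemma LA2:
  assumes J: "Anti J" and hyp: "\<And>h. Circ h \<Longrightarrow> ip EE h J = 0"
  shows "\<exists>a. \<forall>e\<in>EE. J e = gradf a e"
proof -
  have "\<exists>c. \<forall>j\<in>VV. ip EE (\<lambda>s. J s - (\<Sum>i\<in>VV. c i * gradf (dlt i) s)) (gradf (dlt j)) = 0"
    using gs_decomp[OF fin(2) fin(1), of J "\<lambda>i. gradf (dlt i)"] by simp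
  then obtain c where c: "\<And>j. j \<in> VV \<Longrightarrow> ip EE (\<lambda>s. J s - (\<Sum>i\<in>VV. c i * gradf (dlt i) s)) (gradf (dlt j)) = 0"
    by blast
  define z where "z = (\<lambda>s. J s - (\<Sum>i\<in>VV. c i * gradf (dlt i) s))"
  have zA: "Anti z" unfolding Anti_def
  proof
    fix x assume x: "x \<in> EE"
    have "(\<Sum>i\<in>VV. c i * gradf (dlt i) (rE x)) = (\<Sum>i\<in>VV. - (c i * gradf (dlt i) x))"
      by (rule sum.cong) (simp_all add: gradf_def edge x algebra_simps)
    then show "z (rE x) = - z x" using J x by (simp add: sum_negf z_def Anti_def)
  qed
  have zC: "Circ z" unfolding Circ_def using zA c ip_grad_dlt[OF zA] by (simp add: z_def[symmetric])
  have "ip EE z z = ip EE J z - ip EE (\<lambda>s. \<Sum>i\<in>VV. c i * gradf (dlt i) s) z"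
    unfolding z_def[of] by (rule ip_diff_left)
  also have "ip EE J z = 0" using hyp[OF zC] by (simp add: ip_sym)
  also have "ip EE (\<lambda>s. \<Sum>i\<in>VV. c i * gradf (dlt i) s) z = 0"
    unfolding ip_sum_left using zC by (simp add: ip_sym[of EE _ z] ip_grad_dlt[OF zA] Circ_def)
  finally have "ip EE z z = 0" by simp
  then have z0: "\<And>s. s \<in> EE \<Longrightarrow> z s = 0" using ip_self_zero[OF fin(2)] by blast
  define a where "a = (\<lambda>u. if u \<in> VV then c u else 0)"
  have "J e = gradf a e" if e: "e \<in> EE" for e
  proof -
    have "(\<Sum>i\<in>VV. c i * gradf (dlt i) e) = (\<Sum>i\<in>VV. c i * dlt i (hE e)) - (\<Sum>i\<in>VV. c i * dlt i (tE e))"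
      by (simp add: gradf_def right_diff_distrib sum_subtractf)
    also have "\<dots> = gradf a e"
      using fin edge[OF e] by (simp add: dlt_def gradf_def a_def if_distrib[of "\<lambda>t. _ * t"] cong: if_cong)
    finally show ?thesis using z0[OF e] by (simp add: z_def)
  qed
  then show ?thesis by blast
qed


lemma sum_swap_mult:
  "(\<Sum>v\<in>A. (a::'x \<Rightarrow> real) v * (\<Sum>i\<in>B. c v i * x i)) = (\<Sum>i\<in>B. (\<Sum>v\<in>A. a v * c v i) * x i)"
proof -
  have "(\<Sum>v\<in>A. a v * (\<Sum>i\<in>B. c v i * x i)) = (\<Sum>v\<in>A. \<Sum>i\<in>B. a v * c v i * x i)"
    by (simp add: sum_distrib_left mult.assoc)
  also have "\<dots> = (\<Sum>i\<in>B. \<Sum>v\<in>A. a v * c v i * x i)" by (rule sum.swap)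
  also have "\<dots> = (\<Sum>i\<in>B. (\<Sum>v\<in>A. a v * c v i) * x i)"
    by (simp add: sum_distrib_right)
  finally show ?thesis .
qed

lemma sum_dlt: "s \<in> VV \<Longrightarrow> (\<Sum>v\<in>VV. a v * dlt v s) = a s"
proof -
  assume s: "s \<in> VV"
  have "(\<Sum>v\<in>VV. a v * dlt v s) = (\<Sum>v\<in>VV. if s = v then a v else 0)"
    by (rule sum.cong) (auto simp: dlt_def)
  then show ?thesis using s fin by simp
qed

lemma LA3: "\<exists>z. (\<forall>v. LC (z v)) \<and> (\<forall>a. LC a \<longrightarrow> (\<forall>u\<in>VV. a u = (\<Sum>v\<in>VV. a v * z v u)))"
proof -
  have "\<forall>v. \<exists>c. \<forall>j\<in>EE. ip VV (\<lambda>s. dlt v s - (\<Sum>i\<in>EE. c i * divf (de i) s)) (divf (de j)) = 0"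
  proof
    fix v show "\<exists>c. \<forall>j\<in>EE. ip VV (\<lambda>s. dlt v s - (\<Sum>i\<in>EE. c i * divf (de i) s)) (divf (de j)) = 0"
      using gs_decomp[OF fin(1) fin(2), of "dlt v" "\<lambda>i. divf (de i)"] by simp
  qed
  then have "\<exists>C. \<forall>v. \<forall>j\<in>EE. ip VV (\<lambda>s. dlt v s - (\<Sum>i\<in>EE. C v i * divf (de i) s)) (divf (de j)) = 0"
    by (rule choice)
  then obtain C where C: "\<And>v j. j \<in> EE \<Longrightarrow> ip VV (\<lambda>s. dlt v s - (\<Sum>i\<in>EE. C v i * divf (de i) s)) (divf (de j)) = 0"
    by blast
  define z where "z v = (\<lambda>s. dlt v s - (\<Sum>i\<in>EE. C v i * divf (de i) s))" for v
  have zLC: "LC (z v)" for v unfolding LC_def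
  proof
    fix e assume e: "e \<in> EE"
    have "ip VV (z v) (divf (de e)) = 0" using C[OF e, of v] by (simp only: z_def)
    then show "z v (tE e) = z v (hE e)" using ip_div_de[OF e, of "z v"] by simp
  qed
  have "\<forall>u\<in>VV. a u = (\<Sum>v\<in>VV. a v * z v u)" if aLC: "LC a" for a
  proof -
    define y where "y = (\<lambda>s. a s - (\<Sum>v\<in>VV. a v * z v s))"
    define D where "D i = (\<Sum>v\<in>VV. a v * C v i)" for i
    have yform: "y s = (\<Sum>i\<in>EE. D i * divf (de i) s)" if s: "s \<in> VV" for s
    proof -
      have "(\<Sum>v\<in>VV. a v * z v s) = (\<Sum>v\<in>VV. a v * dlt v s) - (\<Sum>v\<in>VV. a v * (\<Sum>i\<in>EE. C v i * divf (de i) s))"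
        by (simp add: z_def right_diff_distrib sum_subtractf)
      also have "\<dots> = a s - (\<Sum>i\<in>EE. D i * divf (de i) s)"
        by (simp only: sum_dlt[OF s] sum_swap_mult D_def)
      finally show ?thesis by (simp add: y_def)
    qed
    have yLC: "LC y" unfolding LC_def
    proof
      fix e assume e: "e \<in> EE"
      have "z v (tE e) = z v (hE e)" for v using zLC[of v] e by (simp add: LC_def)
      then show "y (tE e) = y (hE e)" using aLC e by (simp add: y_def LC_def)
    qed
    have "ip VV y y = ip VV (\<lambda>s. \<Sum>i\<in>EE. D i * divf (de i) s) y"
      by (rule ip_cong) (simp_all add: yform)
    also have "\<dots> = (\<Sum>i\<in>EE. D i * ip VV (divf (de i)) y)" by (rule ip_sum_left)
    also have "\<dots> = 0"
    proof -
      have "ip VV (divf (de i)) y = 0" if i: "i \<in> EE" for i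
        using ip_div_de[OF i, of y] yLC i by (simp add: ip_sym[of VV "divf (de i)" y] LC_def)
      then show ?thesis by simp
    qed
    finally have "ip VV y y = 0" .
    then have "\<And>s. s \<in> VV \<Longrightarrow> y s = 0" using ip_self_zero[OF fin(1)] by blast
    then show ?thesis by (simp add: y_def)
  qed
  then show ?thesis using zLC by blast
qed

lemma anti_de: "e \<in> EE \<Longrightarrow> Anti (de e)"
  by (simp add: Anti_def de_anti)

lemma LA4: "\<exists>z. (\<forall>e\<in>EE. Circ (z e)) \<and> (\<forall>h. Circ h \<longrightarrow> (\<forall>x\<in>EE. h x = (\<Sum>e\<in>EE. h e / 2 * z e x)))"
proof -
  have "\<forall>e. \<exists>c. \<forall>j\<in>VV. ip EE (\<lambda>s. de e s - (\<Sum>i\<in>VV. c i * gradf (dlt i) s)) (gradf (dlt j)) = 0"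
  proof
    fix e show "\<exists>c. \<forall>j\<in>VV. ip EE (\<lambda>s. de e s - (\<Sum>i\<in>VV. c i * gradf (dlt i) s)) (gradf (dlt j)) = 0"
      using gs_decomp[OF fin(2) fin(1), of "de e" "\<lambda>i. gradf (dlt i)"] by simp
  qed
  then have "\<exists>C. \<forall>e. \<forall>j\<in>VV. ip EE (\<lambda>s. de e s - (\<Sum>i\<in>VV. C e i * gradf (dlt i) s)) (gradf (dlt j)) = 0"
    by (rule choice)
  then obtain C where C: "\<And>e j. j \<in> VV \<Longrightarrow> ip EE (\<lambda>s. de e s - (\<Sum>i\<in>VV. C e i * gradf (dlt i) s)) (gradf (dlt j)) = 0"
    by blast
  define z where "z e = (\<lambda>s. de e s - (\<Sum>i\<in>VV. C e i * gradf (dlt i) s))" for e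
  have zA: "Anti (z e)" if e: "e \<in> EE" for e unfolding Anti_def
  proof
    fix x assume x: "x \<in> EE"
    have "(\<Sum>i\<in>VV. C e i * gradf (dlt i) (rE x)) = (\<Sum>i\<in>VV. - (C e i * gradf (dlt i) x))"
      by (rule sum.cong) (simp_all add: gradf_def edge x algebra_simps)
    then show "z e (rE x) = - z e x" using x e by (simp add: sum_negf z_def de_anti)
  qed
  have zC: "Circ (z e)" if e: "e \<in> EE" for e
    unfolding Circ_def
  proof (intro conjI ballI)
    show "Anti (z e)" using zA[OF e] .
    fix v assume v: "v \<in> VV"
    have "ip EE (z e) (gradf (dlt v)) = 0" using C[OF v, of e] by (simp only: z_def)
    then show "divf (z e) v = 0" using ip_grad_dlt[OF zA[OF e], of v] by simp
  qed
  have "\<forall>x\<in>EE. h x = (\<Sum>e\<in>EE. h e / 2 * z e x)" if hC: "Circ h" for h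
  proof -
    have hA: "Anti h" using hC by (simp add: Circ_def)
    define y where "y = (\<lambda>x. h x - (\<Sum>e\<in>EE. h e / 2 * z e x))"
    define D where "D i = (\<Sum>e\<in>EE. h e / 2 * C e i)" for i
    have yform: "y x = (\<Sum>i\<in>VV. D i * gradf (dlt i) x)" if x: "x \<in> EE" for x
    proof -
      have "(\<Sum>e\<in>EE. h e / 2 * z e x) = (\<Sum>e\<in>EE. h e / 2 * de e x) - (\<Sum>e\<in>EE. h e / 2 * (\<Sum>i\<in>VV. C e i * gradf (dlt i) x))"
        by (simp add: z_def right_diff_distrib sum_subtractf)
      also have "\<dots> = h x - (\<Sum>i\<in>VV. D i * gradf (dlt i) x)"
        by (simp only: sum_de_anti[OF hA x] sum_swap_mult D_def)
      finally show ?thesis by (simp add: y_def)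
    qed
    have yA: "Anti y" unfolding Anti_def
    proof
      fix x assume x: "x \<in> EE"
      have "(\<Sum>e\<in>EE. h e / 2 * z e (rE x)) = (\<Sum>e\<in>EE. - (h e / 2 * z e x))"
        by (rule sum.cong) (use zA x in \<open>simp_all add: Anti_def\<close>)
      then show "y (rE x) = - y x" using hA x by (simp add: y_def sum_negf Anti_def)
    qed
    have yC: "Circ y" unfolding Circ_def
    proof (intro conjI ballI)
      show "Anti y" by (rule yA)
      fix v assume v: "v \<in> VV"
      have "divf y v = divf h v - (\<Sum>e\<in>EE. h e / 2 * divf (z e) v)"
        using divf_lin[of "\<lambda>e. h e / 2" z EE v] by (simp add: y_def divf_def sum_subtractf)
      also have "\<dots> = 0" using hC zC v by (simp add: Circ_def)
      finally show "divf y v = 0" .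
    qed
    have "ip EE y y = ip EE (\<lambda>x. \<Sum>i\<in>VV. D i * gradf (dlt i) x) y"
      by (rule ip_cong) (simp_all add: yform)
    also have "\<dots> = (\<Sum>i\<in>VV. D i * ip EE (gradf (dlt i)) y)" by (rule ip_sum_left)
    also have "\<dots> = 0"
    proof -
      have "ip EE (gradf (dlt i)) y = 0" if i: "i \<in> VV" for i
        using ip_grad_dlt[OF yA, of i] yC i by (simp add: ip_sym[of EE "gradf (dlt i)" y] Circ_def)
      then show ?thesis by simp
    qed
    finally have "ip EE y y = 0" .
    then have "\<And>s. s \<in> EE \<Longrightarrow> y s = 0" using ip_self_zero[OF fin(2)] by blast
    then show ?thesis by (simp add: y_def)
  qed
  then show ?thesis using zC by blast
qed

end

lemma RefInt:
  fixes f :: "real \<Rightarrow> real"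
  assumes c: "continuous_on {0..l} f" and x: "x \<in> {0..l}"
  shows "integral {0..x} (\<lambda>s. f (l - s)) = integral {0..l} f - integral {0..l - x} f"
proof -
  have i1: "integral {0..x} (\<lambda>s. f (l - s)) = integral {-x..0} (\<lambda>y. f (y + l))"
    using Henstock_Kurzweil_Integration.integral_reflect_real[where a=0 and b=x and f="\<lambda>s. f (l - s)"] by (simp add: add.commute)
  have i2: "integral {-x..0} (\<lambda>y. f (y + l)) = integral {l - x..l} f"
    using integral_shift_real_ivl[where f=f and a="l - x" and b=l and c=l] by simp
  have int: "f integrable_on {0..l}" using c by (rule integrable_continuous_interval)
  have i3: "integral {0..l - x} f + integral {l - x..l} f = integral {0..l} f"
    by (rule Henstock_Kurzweil_Integration.integral_combine) (use x int in auto)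
  show ?thesis using i1 i2 i3 by simp
qed


definition lsp :: "'e form set \<Rightarrow> bool" where
  "lsp Y \<longleftrightarrow> (\<lambda>e t. 0) \<in> Y \<and> (\<forall>x\<in>Y. \<forall>y\<in>Y. \<forall>a b. (\<lambda>e t. a * x e t + b * y e t) \<in> Y)"


lemma lfoD:
  assumes "lin_fun_on Y \<phi>"
  shows "\<And>x y. x \<in> Y \<Longrightarrow> y \<in> Y \<Longrightarrow> \<phi> (\<lambda>e t. x e t + y e t) = \<phi> x + \<phi> y"
    and "\<And>c x. x \<in> Y \<Longrightarrow> \<phi> (\<lambda>e t. c * x e t) = c * \<phi> x"
  using assms unfolding lin_fun_on_def by blast+

lemma lspD: "lsp Y \<Longrightarrow> x \<in> Y \<Longrightarrow> y \<in> Y \<Longrightarrow> (\<lambda>e t. a * x e t + b * y e t) \<in> Y"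
  unfolding lsp_def by blast

lemma lsp_scale: "lsp Y \<Longrightarrow> x \<in> Y \<Longrightarrow> (\<lambda>e t. a * x e t) \<in> Y"
  using lspD[of Y x x a 0] by simp

lemma lfo_lin:
  assumes Y: "lsp Y" and \<phi>: "lin_fun_on Y \<phi>" and x: "x \<in> Y" and y: "y \<in> Y"
  shows "\<phi> (\<lambda>e t. a * x e t + b * y e t) = a * \<phi> x + b * \<phi> y"
proof -
  have ax: "(\<lambda>e t. a * x e t) \<in> Y" and bY: "(\<lambda>e t. b * y e t) \<in> Y" using lsp_scale[OF Y] x y by auto
  have "\<phi> (\<lambda>e t. a * x e t + b * y e t) = \<phi> (\<lambda>e t. a * x e t) + \<phi> (\<lambda>e t. b * y e t)"
    using lfoD(1)[OF \<phi> ax bY] by simp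
  also have "\<dots> = a * \<phi> x + b * \<phi> y" using lfoD(2)[OF \<phi> x] lfoD(2)[OF \<phi> y] by simp
  finally show ?thesis .
qed

lemma lfo_zero:
  assumes Y: "lsp Y" and \<phi>: "lin_fun_on Y \<phi>"
  shows "\<phi> (\<lambda>e t. 0) = 0"
proof -
  have z: "(\<lambda>e t. 0) \<in> Y" using Y by (simp add: lsp_def)
  show ?thesis using lfoD(2)[OF \<phi> z, of 0] by simp
qed

lemma lfo_sum:
  assumes Y: "lsp Y" and \<phi>: "lin_fun_on Y \<phi>" and I: "finite I" and F: "\<And>i. i \<in> I \<Longrightarrow> F i \<in> Y"
  shows "(\<lambda>e t. \<Sum>i\<in>I. c i * F i e t) \<in> Y \<and> \<phi> (\<lambda>e t. \<Sum>i\<in>I. c i * F i e t) = (\<Sum>i\<in>I. c i * \<phi> (F i))"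
  using I F
proof (induction I rule: finite_induct)
  case empty then show ?case using Y lfo_zero[OF Y \<phi>] by (simp add: lsp_def)
next
  case (insert k I)
  have S: "(\<lambda>e t. \<Sum>i\<in>I. c i * F i e t) \<in> Y" and P: "\<phi> (\<lambda>e t. \<Sum>i\<in>I. c i * F i e t) = (\<Sum>i\<in>I. c i * \<phi> (F i))"
    using insert by auto
  have Fk: "F k \<in> Y" using insert by auto
  have eq: "(\<lambda>e t. \<Sum>i\<in>insert k I. c i * F i e t) = (\<lambda>e t. c k * F k e t + 1 * (\<lambda>e t. \<Sum>i\<in>I. c i * F i e t) e t)"
    using insert.hyps by (simp add: fun_eq_iff)
  have m: "(\<lambda>e t. c k * F k e t + 1 * (\<lambda>e t. \<Sum>i\<in>I. c i * F i e t) e t) \<in> Y"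
    by (rule lspD[OF Y Fk S])
  have v: "\<phi> (\<lambda>e t. c k * F k e t + 1 * (\<lambda>e t. \<Sum>i\<in>I. c i * F i e t) e t) = c k * \<phi> (F k) + 1 * \<phi> (\<lambda>e t. \<Sum>i\<in>I. c i * F i e t)"
    by (rule lfo_lin[OF Y \<phi> Fk S])
  show ?case unfolding eq using m v P insert.hyps by simp
qed

lemma smooth_pair_lin:
  assumes l: "0 < l1" "0 < l2"
    and s: "smooth_cl l1 f1" "smooth_cl l1 g1" "smooth_cl l2 f2" "smooth_cl l2 g2"
    and p: "smooth_pair w1 l1 f1 w2 l2 f2" "smooth_pair w1 l1 g1 w2 l2 g2"
  shows "smooth_pair w1 l1 (\<lambda>x. a * f1 x + b * g1 x) w2 l2 (\<lambda>x. a * f2 x + b * g2 x)"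
  unfolding smooth_pair_def
proof
  fix n
  have 0: "0 \<in> {0..l1}" "0 \<in> {0..l2}" using l by auto
  have p1: "real w1 ^ n * nderiv l1 f1 n 0 = (-1) ^ n * real w2 ^ n * nderiv l2 f2 n 0"
    and p2: "real w1 ^ n * nderiv l1 g1 n 0 = (-1) ^ n * real w2 ^ n * nderiv l2 g2 n 0"
    using p unfolding smooth_pair_def by blast+
  have "real w1 ^ n * nderiv l1 (\<lambda>x. a * f1 x + b * g1 x) n 0 = a * (real w1 ^ n * nderiv l1 f1 n 0) + b * (real w1 ^ n * nderiv l1 g1 n 0)"
    using nderiv_lin[OF l(1) s(1,2) 0(1)] by (simp add: algebra_simps)
  also have "\<dots> = a * ((-1) ^ n * real w2 ^ n * nderiv l2 f2 n 0) + b * ((-1) ^ n * real w2 ^ n * nderiv l2 g2 n 0)"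
    using p1 p2 by simp
  also have "\<dots> = (-1) ^ n * real w2 ^ n * nderiv l2 (\<lambda>x. a * f2 x + b * g2 x) n 0"
    using nderiv_lin[OF l(2) s(3,4) 0(2)] by (simp add: algebra_simps)
  finally show "real w1 ^ n * nderiv l1 (\<lambda>x. a * f1 x + b * g1 x) n 0 = (-1) ^ n * real w2 ^ n * nderiv l2 (\<lambda>x. a * f2 x + b * g2 x) n 0" .
qed

lemma fun_scale_lin: "(\<lambda>x. c * (a * f x + b * g x)) = (\<lambda>x. a * (c * f x) + b * (c * (g x::real)))"
  by (simp add: fun_eq_iff algebra_simps)

lemma val1_lin:
  fixes S :: "real set"
  assumes "\<exists>\<delta>>0. \<forall>x\<in>S. x < \<delta> \<longrightarrow> F x = c" "\<exists>\<delta>>0. \<forall>x\<in>S. x < \<delta> \<longrightarrow> H x = d"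
  shows "\<exists>\<delta>>0. \<forall>x\<in>S. x < \<delta> \<longrightarrow> a * F x + b * H x = a * c + b * (d::real)"
proof -
  obtain d1 d2 where "d1 > 0" "\<forall>x\<in>S. x < d1 \<longrightarrow> F x = c" "d2 > 0" "\<forall>x\<in>S. x < d2 \<longrightarrow> H x = d"
    using assms by blast
  then show ?thesis by (intro exI[of _ "min d1 d2"]) auto
qed

context wg
begin

definition Ig :: "'e form \<Rightarrow> 'e \<Rightarrow> real" where
  "Ig F e = integral {0..lE e} (F e)"

definition ka :: "('v \<Rightarrow> real) \<Rightarrow> 'e form" where
  "ka a = (\<lambda>e t. if e \<in> EE \<and> t \<in> {0..lE e} then a (tE e) else 0)"

definition ah :: "('e \<Rightarrow> real) \<Rightarrow> 'e form" where
  "ah h = (\<lambda>e t. if e \<in> EE \<and> t \<in> {0..lE e} then h e / wE e else 0)"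

lemma out_mem: "e \<in> out v \<Longrightarrow> e \<in> EE \<and> tE e = v"
  by (simp add: out_def')

lemma fin_out: "finite (out v)"
  using fin(2) by (simp add: out_def')

lemma nderiv_rowconst:
  assumes e: "e \<in> EE" and x: "x \<in> {0..lE e}"
    and F: "\<And>t. t \<in> {0..lE e} \<Longrightarrow> F t = c"
  shows "nderiv (lE e) F n x = (if n = 0 then c else 0)"
proof -
  have "nderiv (lE e) F = nderiv (lE e) (\<lambda>t. c)" by (rule nderiv_cong) (simp add: F)
  then show ?thesis using nderiv_const[OF edge(7)[OF e] x] by simp
qed

lemma smooth_rowconst:
  assumes F: "\<And>t. t \<in> {0..lE e} \<Longrightarrow> F t = c"
  shows "smooth_cl (lE e) F"
  using smooth_cl_cong[of "lE e" F "\<lambda>t. c"] F smooth_const by blast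

lemma zero_in: "0 \<in> {0..lE e}" if "e \<in> EE" using edge(7)[OF that] by simp


lemma A00D:
  assumes "A00 G F"
  shows "canonical G F"
    and "\<forall>e\<in>EE. smooth_cl (lE e) (F e)"
    and "\<forall>e\<in>EE. \<forall>x\<in>{0..lE e}. F (rE e) x = F e (lE e - x)"
    and "\<forall>e\<in>EE. \<forall>e'\<in>EE. tE e = tE e' \<longrightarrow> F e 0 = F e' 0"
    and "\<forall>e\<in>EE. valency G (tE e) = 1 \<longrightarrow> (\<exists>\<delta>>0. \<forall>x\<in>{0..lE e}. x < \<delta> \<longrightarrow> F e x = F e 0)"
    and "\<forall>v\<in>VV. \<forall>e1 e2. out v = {e1, e2} \<and> e1 \<noteq> e2 \<longrightarrow> smooth_pair (wt G e1) (lE e1) (F e1) (wt G e2) (lE e2) (F e2)"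
    and "\<forall>v\<in>VV. valency G v \<ge> 3 \<longrightarrow> (\<Sum>e\<in>out v. wE e * nderiv (lE e) (F e) 1 0) = 0"
proof -
  note a = assms[unfolded A00_def]
  from a show "canonical G F" by (elim conjE)
  from a show "\<forall>e\<in>EE. smooth_cl (lE e) (F e)" by (elim conjE)
  from a show "\<forall>e\<in>EE. \<forall>x\<in>{0..lE e}. F (rE e) x = F e (lE e - x)" by (elim conjE)
  from a show "\<forall>e\<in>EE. \<forall>e'\<in>EE. tE e = tE e' \<longrightarrow> F e 0 = F e' 0" by (elim conjE)
  from a show "\<forall>e\<in>EE. valency G (tE e) = 1 \<longrightarrow> (\<exists>\<delta>>0. \<forall>x\<in>{0..lE e}. x < \<delta> \<longrightarrow> F e x = F e 0)" by (elim conjE)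
  from a show "\<forall>v\<in>VV. \<forall>e1 e2. out v = {e1, e2} \<and> e1 \<noteq> e2 \<longrightarrow> smooth_pair (wt G e1) (lE e1) (F e1) (wt G e2) (lE e2) (F e2)" by (elim conjE)
  from a show "\<forall>v\<in>VV. valency G v \<ge> 3 \<longrightarrow> (\<Sum>e\<in>out v. wE e * nderiv (lE e) (F e) 1 0) = 0" by (elim conjE)
qed

lemma A10D:
  assumes "A10 G F"
  shows "canonical G F"
    and "\<forall>e\<in>EE. smooth_cl (lE e) (F e)"
    and "\<forall>e\<in>EE. \<forall>x\<in>{0..lE e}. F (rE e) x = - F e (lE e - x)"
    and "\<forall>e\<in>EE. valency G (tE e) = 1 \<longrightarrow> (\<exists>\<delta>>0. \<forall>x\<in>{0..lE e}. x < \<delta> \<longrightarrow> F e x = 0)"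
    and "\<forall>v\<in>VV. \<forall>e1 e2. out v = {e1, e2} \<and> e1 \<noteq> e2 \<longrightarrow> smooth_pair (wt G e1) (lE e1) (\<lambda>x. wE e1 * F e1 x) (wt G e2) (lE e2) (\<lambda>x. - wE e2 * F e2 x)"
    and "\<forall>v\<in>VV. valency G v \<ge> 3 \<longrightarrow> (\<Sum>e\<in>out v. wE e * F e 0) = 0"
proof -
  note a = assms[unfolded A10_def]
  from a show "canonical G F" by (elim conjE)
  from a show "\<forall>e\<in>EE. smooth_cl (lE e) (F e)" by (elim conjE)
  from a show "\<forall>e\<in>EE. \<forall>x\<in>{0..lE e}. F (rE e) x = - F e (lE e - x)" by (elim conjE)
  from a show "\<forall>e\<in>EE. valency G (tE e) = 1 \<longrightarrow> (\<exists>\<delta>>0. \<forall>x\<in>{0..lE e}. x < \<delta> \<longrightarrow> F e x = 0)" by (elim conjE)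
  from a show "\<forall>v\<in>VV. \<forall>e1 e2. out v = {e1, e2} \<and> e1 \<noteq> e2 \<longrightarrow> smooth_pair (wt G e1) (lE e1) (\<lambda>x. wE e1 * F e1 x) (wt G e2) (lE e2) (\<lambda>x. - wE e2 * F e2 x)" by (elim conjE)
  from a show "\<forall>v\<in>VV. valency G v \<ge> 3 \<longrightarrow> (\<Sum>e\<in>out v. wE e * F e 0) = 0" by (elim conjE)
qed

lemma A11D:
  assumes "A11 G F"
  shows "canonical G F"
    and "\<forall>e\<in>EE. smooth_cl (lE e) (F e)"
    and "\<forall>e\<in>EE. \<forall>x\<in>{0..lE e}. F (rE e) x = F e (lE e - x)"
    and "\<forall>e\<in>EE. valency G (tE e) = 1 \<longrightarrow> (\<exists>\<delta>>0. \<forall>x\<in>{0..lE e}. x < \<delta> \<longrightarrow> F e x = 0)"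
    and "\<forall>v\<in>VV. \<forall>e1 e2. out v = {e1, e2} \<and> e1 \<noteq> e2 \<longrightarrow> smooth_pair (wt G e1) (lE e1) (\<lambda>x. wE e1 ^ 2 * F e1 x) (wt G e2) (lE e2) (\<lambda>x. wE e2 ^ 2 * F e2 x)"
proof -
  note a = assms[unfolded A11_def]
  from a show "canonical G F" by (elim conjE)
  from a show "\<forall>e\<in>EE. smooth_cl (lE e) (F e)" by (elim conjE)
  from a show "\<forall>e\<in>EE. \<forall>x\<in>{0..lE e}. F (rE e) x = F e (lE e - x)" by (elim conjE)
  from a show "\<forall>e\<in>EE. valency G (tE e) = 1 \<longrightarrow> (\<exists>\<delta>>0. \<forall>x\<in>{0..lE e}. x < \<delta> \<longrightarrow> F e x = 0)" by (elim conjE)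
  from a show "\<forall>v\<in>VV. \<forall>e1 e2. out v = {e1, e2} \<and> e1 \<noteq> e2 \<longrightarrow> smooth_pair (wt G e1) (lE e1) (\<lambda>x. wE e1 ^ 2 * F e1 x) (wt G e2) (lE e2) (\<lambda>x. wE e2 ^ 2 * F e2 x)" by (elim conjE)
qed

lemma canonicalD: "canonical G F \<Longrightarrow> \<not> (e \<in> EE \<and> t \<in> {0..lE e}) \<Longrightarrow> F e t = 0"
  unfolding canonical_def by blast

lemma ka_H00:
  assumes aLC: "LC a"
  shows "ka a \<in> H00 G"
proof -
  have row: "\<And>e t. e \<in> EE \<Longrightarrow> t \<in> {0..lE e} \<Longrightarrow> ka a e t = a (tE e)" by (simp add: ka_def)
  have nd: "\<And>e x n. e \<in> EE \<Longrightarrow> x \<in> {0..lE e} \<Longrightarrow> nderiv (lE e) (ka a e) n x = (if n = 0 then a (tE e) else 0)"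
    by (rule nderiv_rowconst) (auto simp: row)
  have "A00 G (ka a)"
    unfolding A00_def
  proof (intro conjI ballI allI impI)
    show "canonical G (ka a)" by (auto simp: canonical_def ka_def)
    fix e assume e: "e \<in> EE"
    show "smooth_cl (lE e) (ka a e)" by (rule smooth_rowconst) (simp add: row e)
    fix x assume x: "x \<in> {0..lE e}"
    show "ka a (rE e) x = ka a e (lE e - x)"
      using x e edge[OF e] aLC by (simp add: ka_def LC_def)
  next
    fix e e' assume "e \<in> EE" "e' \<in> EE" "tE e = tE e'"
    then show "ka a e 0 = ka a e' 0" using zero_in by (simp add: row)
  next
    fix e assume e: "e \<in> EE" "valency G (tE e) = 1"
    show "\<exists>\<delta>>0. \<forall>x\<in>{0..lE e}. x < \<delta> \<longrightarrow> ka a e x = ka a e 0"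
      by (rule exI[of _ 1]) (use e zero_in in \<open>simp add: row\<close>)
  next
    fix v e1 e2 assume v: "v \<in> VV" and o: "out v = {e1, e2} \<and> e1 \<noteq> e2"
    then have e12: "e1 \<in> EE" "e2 \<in> EE" "tE e1 = v" "tE e2 = v" using out_mem by blast+
    show "smooth_pair (wt G e1) (lE e1) (ka a e1) (wt G e2) (lE e2) (ka a e2)"
      unfolding smooth_pair_def using e12 zero_in by (simp add: nd)
  next
    fix v assume "v \<in> VV" "3 \<le> valency G v"
    show "(\<Sum>e\<in>out v. wE e * nderiv (lE e) (ka a e) 1 0) = 0"
      by (rule sum.neutral) (use out_mem zero_in in \<open>simp add: nd\<close>)
  qed
  moreover have "dbar0 G (ka a) = (\<lambda>e x. 0)"
    by (auto simp: dbar0_def nd fun_eq_iff)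
  ultimately show ?thesis by (simp add: H00_def)
qed

lemma H00_const:
  assumes k: "k \<in> H00 G" and e: "e \<in> EE" and x: "x \<in> {0..lE e}"
  shows "k e x = k e 0"
proof -
  have A: "A00 G k" and d: "dbar0 G k = (\<lambda>e x. 0)" using k by (auto simp: H00_def)
  have sm: "smooth_cl (lE e) (k e)" using A00D(2)[OF A] e by blast
  have "nderiv (lE e) (k e) 1 t = 0" if "t \<in> {0..lE e}" for t
    using fun_cong[OF fun_cong[OF d, of e], of t] e that by (simp add: dbar0_def)
  then show ?thesis using deriv_zero_const[OF edge(7)[OF e] sm _ x] by blast
qed

lemma H00_ka:
  assumes k: "k \<in> H00 G"
  shows "\<exists>a. LC a \<and> k = ka a"
proof -
  have A: "A00 G k" using k by (simp add: H00_def)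
  define a where "a v = k (SOME e. e \<in> out v) 0" for v
  have at: "a (tE e) = k e 0" if e: "e \<in> EE" for e
  proof -
    have "e \<in> out (tE e)" using e by (simp add: out_def')
    then have "(SOME e'. e' \<in> out (tE e)) \<in> out (tE e)" by (rule someI)
    then have s1: "(SOME e'. e' \<in> out (tE e)) \<in> EE" and s2: "tE (SOME e'. e' \<in> out (tE e)) = tE e"
      using out_mem by blast+
    show ?thesis unfolding a_def using A00D(4)[OF A] s1 e s2 by blast
  qed
  have "LC a" unfolding LC_def
  proof
    fix e assume e: "e \<in> EE"
    have "a (hE e) = k (rE e) 0" using at[OF edge(1)[OF e]] edge[OF e] by simp
    also have "\<dots> = k e (lE e)" using A00D(3)[OF A] e zero_in[OF e] by simp
    also have "\<dots> = k e 0" using H00_const[OF k e, of "lE e"] edge(7)[OF e] by simp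
    finally show "a (tE e) = a (hE e)" using at[OF e] by simp
  qed
  moreover have "k = ka a"
  proof (intro ext)
    fix e t
    show "k e t = ka a e t"
    proof (cases "e \<in> EE \<and> t \<in> {0..lE e}")
      case True
      then have "k e t = k e 0" using H00_const[OF k] by blast
      then show ?thesis using True at by (simp add: ka_def)
    next
      case False then show ?thesis using canonicalD[OF A00D(1)[OF A] False] False unfolding ka_def by auto
    qed
  qed
  ultimately show ?thesis by blast
qed


lemma valency_cases:
  assumes "v \<in> VV"
  obtains (c0) "out v = {}"
  | (c1) e where "out v = {e}" "valency G v = 1"
  | (c2) e1 e2 where "out v = {e1, e2}" "e1 \<noteq> e2"
  | (c3) "3 \<le> valency G v"
proof -
  consider "card (out v) = 0" | "card (out v) = 1" | "card (out v) = 2" | "3 \<le> card (out v)" by linarith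
  then show ?thesis
  proof cases
    case 1 then show ?thesis using c0 fin_out by simp
  next
    case 2 then show ?thesis using c1 by (metis card_1_singletonE valency_def)
  next
    case 3 then show ?thesis using c2 by (metis card_2_iff)
  next
    case 4 then show ?thesis using c3 by (simp add: valency_def)
  qed
qed

lemma flux10:
  assumes A: "A10 G F" and v: "v \<in> VV"
  shows "(\<Sum>e\<in>out v. wE e * F e 0) = 0"
  using v
proof (cases rule: valency_cases)
  case c0 then show ?thesis by simp
next
  case (c1 e)
  then have e: "e \<in> EE" "tE e = v" using out_mem by auto
  then obtain d where d: "d > 0" "\<forall>x\<in>{0..lE e}. x < d \<longrightarrow> F e x = 0"
    using A10D(4)[OF A] c1 by blast
  then have "F e 0 = 0" using zero_in[OF e(1)] by blast
  then show ?thesis using c1 by simp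
next
  case (c2 e1 e2)
  then have e: "e1 \<in> EE" "e2 \<in> EE" using out_mem by auto
  have sp: "smooth_pair (wt G e1) (lE e1) (\<lambda>x. wE e1 * F e1 x) (wt G e2) (lE e2) (\<lambda>x. - wE e2 * F e2 x)"
    using A10D(5)[OF A] v c2 by blast
  have s1: "smooth_cl (lE e1) (F e1)" "smooth_cl (lE e2) (F e2)" using A10D(2)[OF A] e by blast+
  have "nderiv (lE e1) (\<lambda>x. wE e1 * F e1 x) 0 0 = (-1) ^ 0 * wE e2 ^ 0 * nderiv (lE e2) (\<lambda>x. - wE e2 * F e2 x) 0 0"
    using sp unfolding smooth_pair_def by (metis mult_1 power_0)
  then have "wE e1 * F e1 0 = - wE e2 * F e2 0"
    using nderiv_scale[OF edge(7)[OF e(1)] s1(1) zero_in[OF e(1)], of "wE e1" 0]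
      nderiv_scale[OF edge(7)[OF e(2)] s1(2) zero_in[OF e(2)], of "- wE e2" 0]
      smooth_nderiv0[OF edge(7)[OF e(1)] s1(1) zero_in[OF e(1)]]
      smooth_nderiv0[OF edge(7)[OF e(2)] s1(2) zero_in[OF e(2)]]
    by simp
  then show ?thesis using c2 by simp
next
  case c3 then show ?thesis using A10D(6)[OF A] v by blast
qed

lemma H10_const:
  assumes k: "k \<in> H10 G" and e: "e \<in> EE" and x: "x \<in> {0..lE e}"
  shows "k e x = k e 0"
proof -
  have A: "A10 G k" and d: "dbar1 G k = (\<lambda>e x. 0)" using k by (auto simp: H10_def)
  have sm: "smooth_cl (lE e) (k e)" using A10D(2)[OF A] e by blast
  have "nderiv (lE e) (k e) 1 t = 0" if "t \<in> {0..lE e}" for t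
    using fun_cong[OF fun_cong[OF d, of e], of t] e that by (simp add: dbar1_def)
  then show ?thesis using deriv_zero_const[OF edge(7)[OF e] sm _ x] by blast
qed

lemma H10_ah:
  assumes k: "k \<in> H10 G"
  shows "\<exists>h. Circ h \<and> k = ah h"
proof -
  have A: "A10 G k" using k by (simp add: H10_def)
  define h where "h e = wE e * k e 0" for e
  have "Anti h" unfolding Anti_def
  proof
    fix e assume e: "e \<in> EE"
    have "k (rE e) 0 = - k e (lE e)" using A10D(3)[OF A] e zero_in[OF e] by simp
    also have "k e (lE e) = k e 0" using H10_const[OF k e, of "lE e"] edge(7)[OF e] by simp
    finally show "h (rE e) = - h e" using edge[OF e] by (simp add: h_def)
  qed
  moreover have "divf h v = 0" if v: "v \<in> VV" for v
    using flux10[OF A v] by (simp add: divf_def h_def)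
  ultimately have "Circ h" by (simp add: Circ_def)
  moreover have "k = ah h"
  proof (intro ext)
    fix e t
    show "k e t = ah h e t"
    proof (cases "e \<in> EE \<and> t \<in> {0..lE e}")
      case True
      then have "k e t = k e 0" using H10_const[OF k] by blast
      then show ?thesis using True edge(9)[of e] by (simp add: ah_def h_def)
    next
      case False then show ?thesis using canonicalD[OF A10D(1)[OF A] False] False unfolding ah_def by auto
    qed
  qed
  ultimately show ?thesis by blast
qed

lemma ah_H10:
  assumes hC: "Circ h"
  shows "ah h \<in> H10 G"
proof -
  have hA: "\<And>e. e \<in> EE \<Longrightarrow> h (rE e) = - h e" using hC by (simp add: Circ_def Anti_def)
  have hD: "\<And>v. v \<in> VV \<Longrightarrow> (\<Sum>e\<in>out v. h e) = 0" using hC by (simp add: Circ_def divf_def)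
  have row: "\<And>e t. e \<in> EE \<Longrightarrow> t \<in> {0..lE e} \<Longrightarrow> ah h e t = h e / wE e" by (simp add: ah_def)
  have nd: "\<And>e x n. e \<in> EE \<Longrightarrow> x \<in> {0..lE e} \<Longrightarrow> nderiv (lE e) (ah h e) n x = (if n = 0 then h e / wE e else 0)"
    by (rule nderiv_rowconst) (auto simp: row)
  have ndw: "\<And>e n c. e \<in> EE \<Longrightarrow> nderiv (lE e) (\<lambda>x. c * wE e * ah h e x) n 0 = (if n = 0 then c * h e else 0)"
  proof -
    fix e n c assume e: "e \<in> EE"
    show "nderiv (lE e) (\<lambda>x. c * wE e * ah h e x) n 0 = (if n = 0 then c * h e else 0)"
      by (rule nderiv_rowconst[OF e zero_in[OF e]]) (use e edge(9)[OF e] in \<open>simp add: row\<close>)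
  qed
  have "A10 G (ah h)"
    unfolding A10_def
  proof (intro conjI ballI allI impI)
    show "canonical G (ah h)" by (auto simp: canonical_def ah_def)
    fix e assume e: "e \<in> EE"
    show "smooth_cl (lE e) (ah h e)" by (rule smooth_rowconst) (simp add: row e)
    fix x assume x: "x \<in> {0..lE e}"
    show "ah h (rE e) x = - ah h e (lE e - x)"
      using x e edge[OF e] hA[OF e] by (simp add: ah_def)
  next
    fix e assume e: "e \<in> EE" "valency G (tE e) = 1"
    then obtain e' where o: "out (tE e) = {e'}" by (metis card_1_singletonE valency_def)
    have "e \<in> out (tE e)" using e by (simp add: out_def')
    then have "out (tE e) = {e}" using o by simp
    then have "h e = 0" using hD[OF edge(4)[OF e(1)]] by simp
    then show "\<exists>\<delta>>0. \<forall>x\<in>{0..lE e}. x < \<delta> \<longrightarrow> ah h e x = 0"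
      by (intro exI[of _ 1]) (simp add: ah_def)
  next
    fix v e1 e2 assume v: "v \<in> VV" and o: "out v = {e1, e2} \<and> e1 \<noteq> e2"
    then have e12: "e1 \<in> EE" "e2 \<in> EE" using out_mem by blast+
    have "h e1 + h e2 = 0" using hD[OF v] o by simp
    then show "smooth_pair (wt G e1) (lE e1) (\<lambda>x. wE e1 * ah h e1 x) (wt G e2) (lE e2) (\<lambda>x. - wE e2 * ah h e2 x)"
      unfolding smooth_pair_def using ndw[OF e12(1), where c=1] ndw[OF e12(2), where c="-1"] by simp
  next
    fix v assume v: "v \<in> VV" "3 \<le> valency G v"
    have "(\<Sum>e\<in>out v. wE e * ah h e 0) = (\<Sum>e\<in>out v. h e)"
      by (rule sum.cong) (use out_mem zero_in edge(9) in \<open>auto simp: row\<close>)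
    then show "(\<Sum>e\<in>out v. wE e * ah h e 0) = 0" using hD[OF v(1)] by simp
  qed
  moreover have "dbar1 G (ah h) = (\<lambda>e x. 0)"
    by (auto simp: dbar1_def nd fun_eq_iff)
  ultimately show ?thesis by (simp add: H10_def)
qed


lemma smooth_integrable: "smooth_cl l f \<Longrightarrow> f integrable_on {0..l}"
  unfolding smooth_cl_def using ds_cont integrable_continuous_interval by blast

lemma smooth_contin: "smooth_cl l f \<Longrightarrow> continuous_on {0..l} f"
  unfolding smooth_cl_def using ds_cont by blast

lemma pair_ka: "integral_graph G (wedge (ka a) \<Omega>) = (1/2) * (\<Sum>e\<in>EE. wE e * a (tE e) * Ig \<Omega> e)"
proof -
  have "integral {0..lE e} (wedge (ka a) \<Omega> e) = a (tE e) * Ig \<Omega> e" if e: "e \<in> EE" for e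
  proof -
    have "integral {0..lE e} (wedge (ka a) \<Omega> e) = integral {0..lE e} (\<lambda>t. a (tE e) * \<Omega> e t)"
      by (rule integral_cong) (simp add: wedge_def ka_def e)
    then show ?thesis by (simp add: Ig_def)
  qed
  then show ?thesis unfolding integral_graph_def by (simp add: mult.assoc)
qed

lemma pair_ah: "integral_graph G (wedge (ah h) \<beta>) = (1/2) * (\<Sum>e\<in>EE. h e * Ig \<beta> e)"
proof -
  have "wE e * integral {0..lE e} (wedge (ah h) \<beta> e) = h e * Ig \<beta> e" if e: "e \<in> EE" for e
  proof -
    have "integral {0..lE e} (wedge (ah h) \<beta> e) = integral {0..lE e} (\<lambda>t. (h e / wE e) * \<beta> e t)"
      by (rule integral_cong) (simp add: wedge_def ah_def e)
    then show ?thesis using edge(9)[OF e] by (simp add: Ig_def)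
  qed
  then show ?thesis unfolding integral_graph_def by simp
qed

lemma Ig_lin:
  assumes "F e integrable_on {0..lE e}" "H e integrable_on {0..lE e}"
  shows "Ig (\<lambda>e t. a * F e t + b * H e t) e = a * Ig F e + b * Ig H e"
proof -
  have "integral {0..lE e} (\<lambda>t. a * F e t + b * H e t) = integral {0..lE e} (\<lambda>t. a * F e t) + integral {0..lE e} (\<lambda>t. b * H e t)"
    by (rule integral_add) (use assms in \<open>auto intro: integrable_on_mult_right\<close>)
  then show ?thesis by (simp add: Ig_def)
qed

lemma Ig_sum:
  assumes "finite I" "\<And>i. i \<in> I \<Longrightarrow> F i e integrable_on {0..lE e}"
  shows "Ig (\<lambda>e t. \<Sum>i\<in>I. c i * F i e t) e = (\<Sum>i\<in>I. c i * Ig (F i) e)"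
proof -
  have "integral {0..lE e} (\<lambda>t. \<Sum>i\<in>I. c i * F i e t) = (\<Sum>i\<in>I. integral {0..lE e} (\<lambda>t. c i * F i e t))"
    by (rule integral_sum) (use assms in \<open>auto intro: integrable_on_mult_right\<close>)
  then show ?thesis by (simp add: Ig_def)
qed

lemma Ig_refl:
  assumes sm: "smooth_cl (lE e) f" and e: "e \<in> EE"
  shows "integral {0..lE e} (\<lambda>s. f (lE e - s)) = integral {0..lE e} f"
  using RefInt[OF smooth_contin[OF sm], of "lE e"] edge(7)[OF e] by simp

lemma Ig_sym11:
  assumes A: "A11 G F" and e: "e \<in> EE"
  shows "Ig F (rE e) = Ig F e"
proof -
  have "Ig F (rE e) = integral {0..lE e} (\<lambda>s. F e (lE e - s))"
    unfolding Ig_def edge(8)[OF e] by (rule integral_cong) (use A11D(3)[OF A] e in auto)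
  also have "\<dots> = Ig F e" using Ig_refl[OF _ e] A11D(2)[OF A] e by (simp add: Ig_def)
  finally show ?thesis .
qed

lemma Ig_anti10:
  assumes A: "A10 G F" and e: "e \<in> EE"
  shows "Ig F (rE e) = - Ig F e"
proof -
  have "Ig F (rE e) = integral {0..lE e} (\<lambda>s. - F e (lE e - s))"
    unfolding Ig_def edge(8)[OF e] by (rule integral_cong) (use A10D(3)[OF A] e in auto)
  also have "\<dots> = - Ig F e" using Ig_refl[OF _ e] A10D(2)[OF A] e by (simp add: Ig_def integral_neg)
  finally show ?thesis .
qed

lemma Ig_dbar1:
  assumes A: "A10 G F" and e: "e \<in> EE"
  shows "Ig (dbar1 G F) e = F e 0 + F (rE e) 0"
proof -
  have sm: "smooth_cl (lE e) (F e)" using A10D(2)[OF A] e by blast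
  have "Ig (dbar1 G F) e = integral {0..lE e} (\<lambda>x. - nderiv (lE e) (F e) 1 x)"
    unfolding Ig_def by (rule integral_cong) (simp add: dbar1_def e)
  also have "\<dots> = - (F e (lE e) - F e 0)" using ftc_smooth[OF edge(7)[OF e] sm] by (simp add: integral_neg)
  also have "F (rE e) 0 = - F e (lE e)" using A10D(3)[OF A] e zero_in[OF e] by simp
  ultimately show ?thesis by simp
qed

lemma Ig_dbar0:
  assumes A: "A00 G F" and e: "e \<in> EE"
  shows "Ig (dbar0 G F) e = F (rE e) 0 - F e 0"
proof -
  have sm: "smooth_cl (lE e) (F e)" using A00D(2)[OF A] e by blast
  have "Ig (dbar0 G F) e = integral {0..lE e} (\<lambda>x. nderiv (lE e) (F e) 1 x)"
    unfolding Ig_def by (rule integral_cong) (simp add: dbar0_def e)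
  also have "\<dots> = F e (lE e) - F e 0" using ftc_smooth[OF edge(7)[OF e] sm] by simp
  also have "F (rE e) 0 = F e (lE e)" using A00D(3)[OF A] e zero_in[OF e] by simp
  ultimately show ?thesis by simp
qed

lemma A00_vertex:
  assumes A: "A00 G f"
  shows "\<exists>fv. \<forall>e\<in>EE. f e 0 = fv (tE e)"
proof -
  define fv where "fv v = f (SOME e. e \<in> out v) 0" for v
  have "f e 0 = fv (tE e)" if e: "e \<in> EE" for e
  proof -
    have "e \<in> out (tE e)" using e by (simp add: out_def')
    then have "(SOME e'. e' \<in> out (tE e)) \<in> out (tE e)" by (rule someI)
    then have s1: "(SOME e'. e' \<in> out (tE e)) \<in> EE" and s2: "tE (SOME e'. e' \<in> out (tE e)) = tE e"
      using out_mem by blast+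
    show ?thesis unfolding fv_def using A00D(4)[OF A] s1 e s2 by metis
  qed
  then show ?thesis by blast
qed

lemma clause1_first:
  assumes aLC: "LC a" and A: "A10 G \<alpha>"
  shows "integral_graph G (wedge (ka a) (dbar1 G \<alpha>)) = 0"
proof -
  have "(\<Sum>e\<in>EE. wE e * a (tE e) * Ig (dbar1 G \<alpha>) e)
      = (\<Sum>e\<in>EE. wE e * a (tE e) * \<alpha> e 0) + (\<Sum>e\<in>EE. wE e * a (tE e) * \<alpha> (rE e) 0)"
    by (simp add: Ig_dbar1[OF A] distrib_left sum.distrib)
  also have "(\<Sum>e\<in>EE. wE e * a (tE e) * \<alpha> (rE e) 0) = (\<Sum>e\<in>EE. wE (rE e) * a (tE (rE e)) * \<alpha> (rE (rE e)) 0)"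
    by (rule sum_rev[symmetric])
  also have "\<dots> = (\<Sum>e\<in>EE. wE e * a (tE e) * \<alpha> e 0)"
    by (rule sum.cong) (use aLC edge in \<open>auto simp: LC_def\<close>)
  also have "(\<Sum>e\<in>EE. wE e * a (tE e) * \<alpha> e 0) = (\<Sum>e\<in>EE. (wE e * \<alpha> e 0) * a (tE e))"
    by (simp add: algebra_simps)
  also have "\<dots> = (\<Sum>v\<in>VV. a v * (\<Sum>e\<in>out v. wE e * \<alpha> e 0))" by (rule sum_group_tail)
  also have "\<dots> = 0" using flux10[OF A] by simp
  finally show ?thesis by (simp add: pair_ka)
qed

lemma clause1_second:
  assumes hC: "Circ h" and A: "A00 G f"
  shows "integral_graph G (wedge (ah h) (dbar0 G f)) = 0"
proof -
  obtain fv where fv: "\<And>e. e \<in> EE \<Longrightarrow> f e 0 = fv (tE e)" using A00_vertex[OF A] by blast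
  have hA: "\<And>e. e \<in> EE \<Longrightarrow> h (rE e) = - h e" using hC by (simp add: Circ_def Anti_def)
  have 1: "(\<Sum>e\<in>EE. h e * Ig (dbar0 G f) e) = (\<Sum>e\<in>EE. h e * f (rE e) 0) - (\<Sum>e\<in>EE. h e * f e 0)"
    by (simp add: Ig_dbar0[OF A] right_diff_distrib sum_subtractf)
  have "(\<Sum>e\<in>EE. h e * f (rE e) 0) = (\<Sum>e\<in>EE. h (rE e) * f (rE (rE e)) 0)"
    by (rule sum_rev[symmetric])
  also have "\<dots> = (\<Sum>e\<in>EE. - (h e * f e 0))"
    by (rule sum.cong) (use hA edge in auto)
  finally have 2: "(\<Sum>e\<in>EE. h e * f (rE e) 0) = - (\<Sum>e\<in>EE. h e * f e 0)" by (simp add: sum_negf)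
  have "(\<Sum>e\<in>EE. h e * f e 0) = (\<Sum>e\<in>EE. h e * fv (tE e))"
    by (rule sum.cong) (simp_all add: fv)
  also have "\<dots> = (\<Sum>v\<in>VV. fv v * divf h v)" by (simp add: sum_group_tail divf_def)
  also have "\<dots> = 0" using hC by (simp add: Circ_def)
  finally have 3: "(\<Sum>e\<in>EE. h e * f e 0) = 0" .
  have "(\<Sum>e\<in>EE. h e * Ig (dbar0 G f) e) = 0" using 1 2 3 by simp
  then show ?thesis by (simp add: pair_ah)
qed


lemma A00_lin:
  assumes F: "A00 G F" and H: "A00 G H"
  shows "A00 G (\<lambda>e t. a * F e t + b * H e t)"
  unfolding A00_def
proof (intro conjI ballI allI impI)
  show "canonical G (\<lambda>e t. a * F e t + b * H e t)"
    using A00D(1)[OF F] A00D(1)[OF H] by (simp add: canonical_def)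
  fix e assume e: "e \<in> EE"
  have sF: "smooth_cl (lE e) (F e)" and sH: "smooth_cl (lE e) (H e)" using A00D(2) F H e by blast+
  show "smooth_cl (lE e) (\<lambda>t. a * F e t + b * H e t)" by (rule smooth_lin[OF edge(7)[OF e] sF sH])
  fix x assume x: "x \<in> {0..lE e}"
  show "a * F (rE e) x + b * H (rE e) x = a * F e (lE e - x) + b * H e (lE e - x)"
    using A00D(3)[OF F] A00D(3)[OF H] e x by simp
next
  fix e e' assume "e \<in> EE" "e' \<in> EE" "tE e = tE e'"
  then show "a * F e 0 + b * H e 0 = a * F e' 0 + b * H e' 0"
    using A00D(4)[OF F] A00D(4)[OF H] by metis
next
  fix e assume e: "e \<in> EE" "valency G (tE e) = 1"
  show "\<exists>\<delta>>0. \<forall>x\<in>{0..lE e}. x < \<delta> \<longrightarrow> a * F e x + b * H e x = a * F e 0 + b * H e 0"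
    by (rule val1_lin) (use A00D(5)[OF F] A00D(5)[OF H] e in blast)+
next
  fix v e1 e2 assume v: "v \<in> VV" and o: "out v = {e1, e2} \<and> e1 \<noteq> e2"
  then have e12: "e1 \<in> EE" "e2 \<in> EE" using out_mem by blast+
  show "smooth_pair (wt G e1) (lE e1) (\<lambda>t. a * F e1 t + b * H e1 t) (wt G e2) (lE e2) (\<lambda>t. a * F e2 t + b * H e2 t)"
    by (rule smooth_pair_lin[OF edge(7)[OF e12(1)] edge(7)[OF e12(2)]])
       (use A00D(2)[OF F] A00D(2)[OF H] A00D(6)[OF F] A00D(6)[OF H] v o e12 in blast)+
next
  fix v assume v: "v \<in> VV" "3 \<le> valency G v"
  have "(\<Sum>e\<in>out v. wE e * nderiv (lE e) (\<lambda>t. a * F e t + b * H e t) 1 0)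
      = a * (\<Sum>e\<in>out v. wE e * nderiv (lE e) (F e) 1 0) + b * (\<Sum>e\<in>out v. wE e * nderiv (lE e) (H e) 1 0)"
  proof -
    have "(\<Sum>e\<in>out v. wE e * nderiv (lE e) (\<lambda>t. a * F e t + b * H e t) 1 0)
        = (\<Sum>e\<in>out v. a * (wE e * nderiv (lE e) (F e) 1 0) + b * (wE e * nderiv (lE e) (H e) 1 0))"
    proof (rule sum.cong)
      fix e assume "e \<in> out v"
      then have e: "e \<in> EE" using out_mem by blast
      show "wE e * nderiv (lE e) (\<lambda>t. a * F e t + b * H e t) 1 0 = a * (wE e * nderiv (lE e) (F e) 1 0) + b * (wE e * nderiv (lE e) (H e) 1 0)"
        using nderiv_lin[OF edge(7)[OF e] _ _ zero_in[OF e], of "F e" "H e" a b 1] A00D(2)[OF F] A00D(2)[OF H] e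
        by (simp add: algebra_simps)
    qed simp
    then show ?thesis by (simp add: sum.distrib sum_distrib_left)
  qed
  then show "(\<Sum>e\<in>out v. wE e * nderiv (lE e) (\<lambda>t. a * F e t + b * H e t) 1 0) = 0"
    using A00D(7)[OF F] A00D(7)[OF H] v by simp
qed

lemma A10_lin:
  assumes F: "A10 G F" and H: "A10 G H"
  shows "A10 G (\<lambda>e t. a * F e t + b * H e t)"
  unfolding A10_def
proof (intro conjI ballI allI impI)
  show "canonical G (\<lambda>e t. a * F e t + b * H e t)"
    using A10D(1)[OF F] A10D(1)[OF H] by (simp add: canonical_def)
  fix e assume e: "e \<in> EE"
  have sF: "smooth_cl (lE e) (F e)" and sH: "smooth_cl (lE e) (H e)" using A10D(2) F H e by blast+
  show "smooth_cl (lE e) (\<lambda>t. a * F e t + b * H e t)" by (rule smooth_lin[OF edge(7)[OF e] sF sH])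
  fix x assume x: "x \<in> {0..lE e}"
  show "a * F (rE e) x + b * H (rE e) x = - (a * F e (lE e - x) + b * H e (lE e - x))"
    using A10D(3)[OF F] A10D(3)[OF H] e x by simp
next
  fix e assume e: "e \<in> EE" "valency G (tE e) = 1"
  have "\<exists>\<delta>>0. \<forall>x\<in>{0..lE e}. x < \<delta> \<longrightarrow> a * F e x + b * H e x = a * 0 + b * 0"
    by (rule val1_lin) (use A10D(4)[OF F] A10D(4)[OF H] e in blast)+
  then show "\<exists>\<delta>>0. \<forall>x\<in>{0..lE e}. x < \<delta> \<longrightarrow> a * F e x + b * H e x = 0" by simp
next
  fix v e1 e2 assume v: "v \<in> VV" and o: "out v = {e1, e2} \<and> e1 \<noteq> e2"
  then have e12: "e1 \<in> EE" "e2 \<in> EE" using out_mem by blast+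
  have sm: "smooth_cl (lE e1) (\<lambda>x. wE e1 * F e1 x)" "smooth_cl (lE e1) (\<lambda>x. wE e1 * H e1 x)"
     "smooth_cl (lE e2) (\<lambda>x. - wE e2 * F e2 x)" "smooth_cl (lE e2) (\<lambda>x. - wE e2 * H e2 x)"
    using A10D(2)[OF F] A10D(2)[OF H] e12 edge(7) smooth_scale by blast+
  have "smooth_pair (wt G e1) (lE e1) (\<lambda>x. a * (wE e1 * F e1 x) + b * (wE e1 * H e1 x)) (wt G e2) (lE e2) (\<lambda>x. a * (- wE e2 * F e2 x) + b * (- wE e2 * H e2 x))"
    by (rule smooth_pair_lin[OF edge(7)[OF e12(1)] edge(7)[OF e12(2)] sm])
       (use A10D(5)[OF F] A10D(5)[OF H] v o in blast)+
  then show "smooth_pair (wt G e1) (lE e1) (\<lambda>x. wE e1 * (a * F e1 x + b * H e1 x)) (wt G e2) (lE e2) (\<lambda>x. - wE e2 * (a * F e2 x + b * H e2 x))"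
    by (simp only: fun_scale_lin)
next
  fix v assume v: "v \<in> VV" "3 \<le> valency G v"
  have "(\<Sum>e\<in>out v. wE e * (a * F e 0 + b * H e 0)) = a * (\<Sum>e\<in>out v. wE e * F e 0) + b * (\<Sum>e\<in>out v. wE e * H e 0)"
    by (simp add: sum.distrib sum_distrib_left algebra_simps)
  then show "(\<Sum>e\<in>out v. wE e * (a * F e 0 + b * H e 0)) = 0"
    using A10D(6)[OF F] A10D(6)[OF H] v by simp
qed

lemma A11_lin:
  assumes F: "A11 G F" and H: "A11 G H"
  shows "A11 G (\<lambda>e t. a * F e t + b * H e t)"
  unfolding A11_def
proof (intro conjI ballI allI impI)
  show "canonical G (\<lambda>e t. a * F e t + b * H e t)"
    using A11D(1)[OF F] A11D(1)[OF H] by (simp add: canonical_def)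
  fix e assume e: "e \<in> EE"
  have sF: "smooth_cl (lE e) (F e)" and sH: "smooth_cl (lE e) (H e)" using A11D(2) F H e by blast+
  show "smooth_cl (lE e) (\<lambda>t. a * F e t + b * H e t)" by (rule smooth_lin[OF edge(7)[OF e] sF sH])
  fix x assume x: "x \<in> {0..lE e}"
  show "a * F (rE e) x + b * H (rE e) x = a * F e (lE e - x) + b * H e (lE e - x)"
    using A11D(3)[OF F] A11D(3)[OF H] e x by simp
next
  fix e assume e: "e \<in> EE" "valency G (tE e) = 1"
  have "\<exists>\<delta>>0. \<forall>x\<in>{0..lE e}. x < \<delta> \<longrightarrow> a * F e x + b * H e x = a * 0 + b * 0"
    by (rule val1_lin) (use A11D(4)[OF F] A11D(4)[OF H] e in blast)+
  then show "\<exists>\<delta>>0. \<forall>x\<in>{0..lE e}. x < \<delta> \<longrightarrow> a * F e x + b * H e x = 0" by simp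
next
  fix v e1 e2 assume v: "v \<in> VV" and o: "out v = {e1, e2} \<and> e1 \<noteq> e2"
  then have e12: "e1 \<in> EE" "e2 \<in> EE" using out_mem by blast+
  have sm: "smooth_cl (lE e1) (\<lambda>x. wE e1 ^ 2 * F e1 x)" "smooth_cl (lE e1) (\<lambda>x. wE e1 ^ 2 * H e1 x)"
     "smooth_cl (lE e2) (\<lambda>x. wE e2 ^ 2 * F e2 x)" "smooth_cl (lE e2) (\<lambda>x. wE e2 ^ 2 * H e2 x)"
    using A11D(2)[OF F] A11D(2)[OF H] e12 edge(7) smooth_scale by blast+
  have "smooth_pair (wt G e1) (lE e1) (\<lambda>x. a * (wE e1 ^ 2 * F e1 x) + b * (wE e1 ^ 2 * H e1 x)) (wt G e2) (lE e2) (\<lambda>x. a * (wE e2 ^ 2 * F e2 x) + b * (wE e2 ^ 2 * H e2 x))"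
    by (rule smooth_pair_lin[OF edge(7)[OF e12(1)] edge(7)[OF e12(2)] sm])
       (use A11D(5)[OF F] A11D(5)[OF H] v o in blast)+
  then show "smooth_pair (wt G e1) (lE e1) (\<lambda>x. wE e1 ^ 2 * (a * F e1 x + b * H e1 x)) (wt G e2) (lE e2) (\<lambda>x. wE e2 ^ 2 * (a * F e2 x + b * H e2 x))"
    by (simp only: fun_scale_lin)
qed

lemma A11_zero: "A11 G (\<lambda>e t. 0)"
  unfolding A11_def
proof (intro conjI ballI allI impI)
  show "canonical G (\<lambda>e t. 0)" by (simp add: canonical_def)
  fix e assume e: "e \<in> EE"
  show "smooth_cl (lE e) (\<lambda>t. 0)" by (rule smooth_const)
next
  fix e show "\<exists>\<delta>>0. \<forall>x\<in>{0..lE e}. x < \<delta> \<longrightarrow> (0::real) = 0" by (intro exI[of _ 1]) simp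
next
  fix v e1 e2 assume v: "v \<in> VV" and o: "out v = {e1, e2} \<and> e1 \<noteq> e2"
  then have e12: "e1 \<in> EE" "e2 \<in> EE" using out_mem by blast+
  show "smooth_pair (wt G e1) (lE e1) (\<lambda>x. wE e1 ^ 2 * 0) (wt G e2) (lE e2) (\<lambda>x. wE e2 ^ 2 * 0)"
    unfolding smooth_pair_def using nderiv_const[OF edge(7)[OF e12(1)] zero_in[OF e12(1)], of 0]
      nderiv_const[OF edge(7)[OF e12(2)] zero_in[OF e12(2)], of 0] by simp
qed simp

lemma zero_ka: "(\<lambda>e t. 0) = ka (\<lambda>v. 0)" by (simp add: ka_def fun_eq_iff)
lemma zero_ah: "(\<lambda>e t. 0) = ah (\<lambda>e. 0)" by (simp add: ah_def fun_eq_iff)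

lemma LC_zero: "LC (\<lambda>v. 0)" by (simp add: LC_def)
lemma Circ_zero: "Circ (\<lambda>e. 0)" by (simp add: Circ_def Anti_def divf_def)

lemma dbar0_lin:
  assumes F: "A00 G F" and H: "A00 G H"
  shows "dbar0 G (\<lambda>e t. a * F e t + b * H e t) = (\<lambda>e x. a * dbar0 G F e x + b * dbar0 G H e x)"
proof (intro ext)
  fix e x
  show "dbar0 G (\<lambda>e t. a * F e t + b * H e t) e x = a * dbar0 G F e x + b * dbar0 G H e x"
  proof (cases "e \<in> EE \<and> x \<in> {0..lE e}")
    case True
    then have e: "e \<in> EE" and x: "x \<in> {0..lE e}" by auto
    have sF: "smooth_cl (lE e) (F e)" and sH: "smooth_cl (lE e) (H e)" using A00D(2) F H e by blast+
    have "nderiv (lE e) (\<lambda>t. a * F e t + b * H e t) 1 x = a * nderiv (lE e) (F e) 1 x + b * nderiv (lE e) (H e) 1 x"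
      by (rule nderiv_lin[OF edge(7)[OF e] sF sH x])
    then show ?thesis using True by (simp add: dbar0_def)
  next
    case False then show ?thesis unfolding dbar0_def by (simp only: if_not_P[OF False]) simp
  qed
qed

lemma dbar1_lin:
  assumes F: "A10 G F" and H: "A10 G H"
  shows "dbar1 G (\<lambda>e t. a * F e t + b * H e t) = (\<lambda>e x. a * dbar1 G F e x + b * dbar1 G H e x)"
proof (intro ext)
  fix e x
  show "dbar1 G (\<lambda>e t. a * F e t + b * H e t) e x = a * dbar1 G F e x + b * dbar1 G H e x"
  proof (cases "e \<in> EE \<and> x \<in> {0..lE e}")
    case True
    then have e: "e \<in> EE" and x: "x \<in> {0..lE e}" by auto
    have sF: "smooth_cl (lE e) (F e)" and sH: "smooth_cl (lE e) (H e)" using A10D(2) F H e by blast+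
    have "nderiv (lE e) (\<lambda>t. a * F e t + b * H e t) 1 x = a * nderiv (lE e) (F e) 1 x + b * nderiv (lE e) (H e) 1 x"
      by (rule nderiv_lin[OF edge(7)[OF e] sF sH x])
    then show ?thesis using True by (simp add: dbar1_def)
  next
    case False then show ?thesis unfolding dbar1_def by (simp only: if_not_P[OF False]) simp
  qed
qed

lemma lsp_A00: "lsp {f. A00 G f}"
  unfolding lsp_def using A00_lin ka_H00[OF LC_zero] zero_ka by (auto simp: H00_def)

lemma lsp_A10: "lsp {f. A10 G f}"
  unfolding lsp_def using A10_lin ah_H10[OF Circ_zero] zero_ah by (auto simp: H10_def)

lemma lsp_A01: "lsp {f. A01 G f}"
  using lsp_A10 by (simp add: A01_def[abs_def])

lemma lsp_A11: "lsp {f. A11 G f}"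
  unfolding lsp_def using A11_lin A11_zero by auto

lemma lsp_H00: "lsp (H00 G)"
  unfolding lsp_def
proof (intro conjI ballI allI)
  show "(\<lambda>e t. 0) \<in> H00 G" using ka_H00[OF LC_zero] zero_ka by simp
  fix x y a b assume x: "x \<in> H00 G" and y: "y \<in> H00 G"
  then have A: "A00 G x" "A00 G y" and d: "dbar0 G x = (\<lambda>e t. 0)" "dbar0 G y = (\<lambda>e t. 0)"
    by (auto simp: H00_def)
  show "(\<lambda>e t. a * x e t + b * y e t) \<in> H00 G"
    unfolding H00_def using A00_lin[OF A, of a b] dbar0_lin[OF A, of a b] d by simp
qed

lemma lsp_H10: "lsp (H10 G)"
  unfolding lsp_def
proof (intro conjI ballI allI)
  show "(\<lambda>e t. 0) \<in> H10 G" using ah_H10[OF Circ_zero] zero_ah by simp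
  fix x y a b assume x: "x \<in> H10 G" and y: "y \<in> H10 G"
  then have A: "A10 G x" "A10 G y" and d: "dbar1 G x = (\<lambda>e t. 0)" "dbar1 G y = (\<lambda>e t. 0)"
    by (auto simp: H10_def)
  show "(\<lambda>e t. a * x e t + b * y e t) \<in> H10 G"
    unfolding H10_def using A10_lin[OF A, of a b] dbar1_lin[OF A, of a b] d by simp
qed


lemma bumprow:
  assumes x: "x \<in> EE" and F: "\<And>t. t \<in> {0..lE x} \<Longrightarrow> F t = c * bn (lE x) t"
  shows "smooth_cl (lE x) F" and "\<And>n. nderiv (lE x) F n 0 = 0"
    and "\<And>t. t \<in> {0..lE x} \<Longrightarrow> t < lE x / 3 \<Longrightarrow> F t = 0"
    and "integral {0..lE x} F = c"
proof -
  have l: "0 < lE x" using edge(7)[OF x] .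
  have eq: "smooth_cl (lE x) F = smooth_cl (lE x) (\<lambda>t. c * bn (lE x) t)" by (rule smooth_cl_cong) (simp add: F)
  show sm: "smooth_cl (lE x) F" unfolding eq by (rule smooth_scale[OF l smooth_bn])
  fix n
  have "nderiv (lE x) F = nderiv (lE x) (\<lambda>t. c * bn (lE x) t)" by (rule nderiv_cong) (simp add: F)
  then show "nderiv (lE x) F n 0 = 0"
    using nderiv_scale[OF l smooth_bn, of 0 c n] nderiv_bn0[OF l] l by simp
next
  fix t assume "t \<in> {0..lE x}" "t < lE x / 3"
  then show "F t = 0" using F bn_small[OF edge(7)[OF x]] by simp
next
  have "integral {0..lE x} F = integral {0..lE x} (\<lambda>t. c * bn (lE x) t)" by (rule integral_cong) (simp add: F)
  then show "integral {0..lE x} F = c" using int_bn[OF edge(7)[OF x]] by simp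
qed

definition Bf :: "'e \<Rightarrow> 'e form" where
  "Bf e = (\<lambda>x t. if x \<in> EE \<and> (x = e \<or> x = rE e) \<and> t \<in> {0..lE x} then bn (lE x) t else 0)"

definition Cf :: "'e \<Rightarrow> 'e form" where
  "Cf e = (\<lambda>x t. if x \<in> EE \<and> t \<in> {0..lE x} then (if x = e then bn (lE x) t else if x = rE e then - bn (lE x) t else 0) else 0)"

definition cB :: "'e \<Rightarrow> 'e \<Rightarrow> real" where
  "cB e x = (if x = e \<or> x = rE e then 1 else 0)"

lemma Bf_row: "x \<in> EE \<Longrightarrow> t \<in> {0..lE x} \<Longrightarrow> d * Bf e x t = (d * cB e x) * bn (lE x) t"
  by (simp add: Bf_def cB_def)

lemma Cf_row: "x \<in> EE \<Longrightarrow> t \<in> {0..lE x} \<Longrightarrow> d * Cf e x t = (d * de e x) * bn (lE x) t"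
  using edge(3)[of x] by (auto simp: Cf_def de_def)

lemma cB_rev: "e \<in> EE \<Longrightarrow> x \<in> EE \<Longrightarrow> cB e (rE x) = cB e x"
  unfolding cB_def using rE_eq[of x e] rE_eq[of x "rE e"] edge[of e] edge[of x] by auto

lemma A11_Bf:
  assumes e: "e \<in> EE"
  shows "A11 G (Bf e)"
  unfolding A11_def
proof (intro conjI ballI allI impI)
  show "canonical G (Bf e)" by (auto simp: canonical_def Bf_def)
  fix x assume x: "x \<in> EE"
  show "smooth_cl (lE x) (Bf e x)" using bumprow(1)[OF x, of "Bf e x" "cB e x"] Bf_row[OF x, of _ 1] by simp
  fix t assume t: "t \<in> {0..lE x}"
  have t': "lE x - t \<in> {0..lE x}" using t by auto
  have "Bf e (rE x) t = cB e (rE x) * bn (lE (rE x)) t"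
    using Bf_row[OF edge(1)[OF x], of t 1 e] t edge[OF x] by simp
  also have "\<dots> = cB e x * bn (lE x) (lE x - t)" using cB_rev[OF e x] edge[OF x] bn_sym by simp
  also have "\<dots> = Bf e x (lE x - t)" using Bf_row[OF x t', of 1 e] by simp
  finally show "Bf e (rE x) t = Bf e x (lE x - t)" .
next
  fix x assume x: "x \<in> EE" "valency G (tE x) = 1"
  show "\<exists>\<delta>>0. \<forall>t\<in>{0..lE x}. t < \<delta> \<longrightarrow> Bf e x t = 0"
    using bumprow(3)[OF x(1), of "Bf e x" "cB e x"] Bf_row[OF x(1), of _ 1] edge(7)[OF x(1)]
    by (intro exI[of _ "lE x / 3"]) simp
next
  fix v e1 e2 assume v: "v \<in> VV" and o: "out v = {e1, e2} \<and> e1 \<noteq> e2"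
  then have e12: "e1 \<in> EE" "e2 \<in> EE" using out_mem by blast+
  have "nderiv (lE e1) (\<lambda>t. wE e1 ^ 2 * Bf e e1 t) n 0 = 0" for n
    using bumprow(2)[OF e12(1), of "\<lambda>t. wE e1 ^ 2 * Bf e e1 t" "wE e1 ^ 2 * cB e e1"] Bf_row[OF e12(1)] by simp
  moreover have "nderiv (lE e2) (\<lambda>t. wE e2 ^ 2 * Bf e e2 t) n 0 = 0" for n
    using bumprow(2)[OF e12(2), of "\<lambda>t. wE e2 ^ 2 * Bf e e2 t" "wE e2 ^ 2 * cB e e2"] Bf_row[OF e12(2)] by simp
  ultimately show "smooth_pair (wt G e1) (lE e1) (\<lambda>t. wE e1 ^ 2 * Bf e e1 t) (wt G e2) (lE e2) (\<lambda>t. wE e2 ^ 2 * Bf e e2 t)"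
    by (simp add: smooth_pair_def)
qed

lemma Ig_Bf: "x \<in> EE \<Longrightarrow> Ig (Bf e) x = cB e x"
  unfolding Ig_def using bumprow(4)[of x "Bf e x" "cB e x"] Bf_row[of x _ 1] by simp

lemma A10_Cf:
  assumes e: "e \<in> EE"
  shows "A10 G (Cf e)"
  unfolding A10_def
proof (intro conjI ballI allI impI)
  show "canonical G (Cf e)" by (auto simp: canonical_def Cf_def)
  fix x assume x: "x \<in> EE"
  show "smooth_cl (lE x) (Cf e x)" using bumprow(1)[OF x, of "Cf e x" "de e x"] Cf_row[OF x, of _ 1] by simp
  fix t assume t: "t \<in> {0..lE x}"
  have t': "lE x - t \<in> {0..lE x}" using t by auto
  have "Cf e (rE x) t = de e (rE x) * bn (lE (rE x)) t"
    using Cf_row[OF edge(1)[OF x], of t 1 e] t edge[OF x] by simp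
  also have "\<dots> = - (de e x * bn (lE x) (lE x - t))" using de_anti[OF e x] edge[OF x] bn_sym by simp
  also have "\<dots> = - Cf e x (lE x - t)" using Cf_row[OF x t', of 1 e] by simp
  finally show "Cf e (rE x) t = - Cf e x (lE x - t)" .
next
  fix x assume x: "x \<in> EE" "valency G (tE x) = 1"
  show "\<exists>\<delta>>0. \<forall>t\<in>{0..lE x}. t < \<delta> \<longrightarrow> Cf e x t = 0"
    using bumprow(3)[OF x(1), of "Cf e x" "de e x"] Cf_row[OF x(1), of _ 1] edge(7)[OF x(1)]
    by (intro exI[of _ "lE x / 3"]) simp
next
  fix v e1 e2 assume v: "v \<in> VV" and o: "out v = {e1, e2} \<and> e1 \<noteq> e2"
  then have e12: "e1 \<in> EE" "e2 \<in> EE" using out_mem by blast+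
  have "nderiv (lE e1) (\<lambda>t. wE e1 * Cf e e1 t) n 0 = 0" for n
    using bumprow(2)[OF e12(1), of "\<lambda>t. wE e1 * Cf e e1 t" "wE e1 * de e e1"] Cf_row[OF e12(1)] by simp
  moreover have "nderiv (lE e2) (\<lambda>t. - wE e2 * Cf e e2 t) n 0 = 0" for n
    using bumprow(2)[OF e12(2), of "\<lambda>t. - wE e2 * Cf e e2 t" "- wE e2 * de e e2"] Cf_row[OF e12(2)] by simp
  ultimately show "smooth_pair (wt G e1) (lE e1) (\<lambda>t. wE e1 * Cf e e1 t) (wt G e2) (lE e2) (\<lambda>t. - wE e2 * Cf e e2 t)"
    by (simp add: smooth_pair_def)
next
  fix v assume v: "v \<in> VV" "3 \<le> valency G v"
  have bz: "\<And>y. y \<in> EE \<Longrightarrow> bn (lE y) 0 = 0" using bn_small edge(7) by simp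
  have "Cf e x 0 = 0" if "x \<in> out v" for x
    using that out_mem bz by (auto simp: Cf_def)
  then show "(\<Sum>x\<in>out v. wE x * Cf e x 0) = 0" by simp
qed

lemma Ig_Cf: "x \<in> EE \<Longrightarrow> Ig (Cf e) x = de e x"
  unfolding Ig_def using bumprow(4)[of x "Cf e x" "de e x"] Cf_row[of x _ 1] by simp

lemma Cf_rev: "e \<in> EE \<Longrightarrow> Cf (rE e) = (\<lambda>x t. (-1) * Cf e x t)"
  using edge[of e] by (auto simp: Cf_def fun_eq_iff)

lemma Bf_rev: "e \<in> EE \<Longrightarrow> Bf (rE e) = Bf e"
  using edge[of e] by (auto simp: Bf_def fun_eq_iff)


lemma prim_row:
  assumes e: "e \<in> EE" and sm: "smooth_cl (lE e) f"
    and P: "\<And>t. t \<in> {0..lE e} \<Longrightarrow> P t = c + integral {0..t} f"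
  shows "smooth_cl (lE e) P"
    and "\<And>x. x \<in> {0..lE e} \<Longrightarrow> nderiv (lE e) P 0 x = P x"
    and "\<And>x m. x \<in> {0..lE e} \<Longrightarrow> nderiv (lE e) P (Suc m) x = nderiv (lE e) f m x"
proof -
  have l: "0 < lE e" using edge(7)[OF e] .
  have D: "deriv_seq (lE e) f (nderiv (lE e) f)" using smooth_ds[OF l sm] .
  have eq: "deriv_seq (lE e) P = deriv_seq (lE e) (\<lambda>x. c + integral {0..x} f)" by (rule ds_cong_iff) (simp add: P)
  have D': "deriv_seq (lE e) P (\<lambda>n x. if n = 0 then c + integral {0..x} f else nderiv (lE e) f (n - 1) x)"
    unfolding eq by (rule ds_prim[OF D])
  show "smooth_cl (lE e) P" using D' smooth_cl_def by blast
  fix x assume x: "x \<in> {0..lE e}"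
  show "nderiv (lE e) P 0 x = P x" using nderiv_eq[OF l D' x, of 0] P[OF x] by simp
  fix m show "nderiv (lE e) P (Suc m) x = nderiv (lE e) f m x" using nderiv_eq[OF l D' x, of "Suc m"] by simp
qed

definition prim1 :: "'e form \<Rightarrow> ('e \<Rightarrow> real) \<Rightarrow> 'e form" where
  "prim1 \<Theta> g = (\<lambda>e t. if e \<in> EE \<and> t \<in> {0..lE e} then g e / wE e + integral {0..t} (\<lambda>s. (-1) * \<Theta> e s) else 0)"

definition prim0 :: "'e form \<Rightarrow> ('v \<Rightarrow> real) \<Rightarrow> 'e form" where
  "prim0 \<Theta> a = (\<lambda>e t. if e \<in> EE \<and> t \<in> {0..lE e} then a (tE e) + integral {0..t} (\<Theta> e) else 0)"

lemma int_zero_near: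
  fixes f :: "real \<Rightarrow> real"
  assumes "\<forall>x\<in>{0..l}. x < d \<longrightarrow> f x = 0" "t \<in> {0..l}" "t < d"
  shows "integral {0..t} f = 0"
proof -
  have "integral {0..t} f = integral {0..t} (\<lambda>x. 0::real)"
    by (rule integral_cong) (use assms in auto)
  then show ?thesis by simp
qed

lemma prim1_ok:
  assumes A: "A11 G \<Theta>"
    and gs: "\<And>e. e \<in> EE \<Longrightarrow> g e + g (rE e) = wE e * Ig \<Theta> e"
    and gd: "\<And>v. v \<in> VV \<Longrightarrow> (\<Sum>e\<in>out v. g e) = 0"
  shows "A10 G (prim1 \<Theta> g)" and "dbar1 G (prim1 \<Theta> g) = \<Theta>"
proof -
  have smT: "\<And>e. e \<in> EE \<Longrightarrow> smooth_cl (lE e) (\<lambda>s. (-1) * \<Theta> e s)"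
    using A11D(2)[OF A] edge(7) smooth_scale by blast
  have smT0: "\<And>e. e \<in> EE \<Longrightarrow> smooth_cl (lE e) (\<Theta> e)" using A11D(2)[OF A] by blast
  have row: "\<And>e t. e \<in> EE \<Longrightarrow> t \<in> {0..lE e} \<Longrightarrow> prim1 \<Theta> g e t = g e / wE e + integral {0..t} (\<lambda>s. (-1) * \<Theta> e s)"
    by (simp add: prim1_def)
  have ndT: "nderiv (lE e) (\<lambda>s. (-1) * \<Theta> e s) m x = - nderiv (lE e) (\<Theta> e) m x" if e: "e \<in> EE" and x: "x \<in> {0..lE e}" for e x m
  proof -
    have sm: "smooth_cl (lE e) (\<Theta> e)" using A11D(2)[OF A] e by blast
    show ?thesis using nderiv_scale[OF edge(7)[OF e] sm x, of "-1" m] by simp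
  qed
  have nd1: "\<And>e x. e \<in> EE \<Longrightarrow> x \<in> {0..lE e} \<Longrightarrow> nderiv (lE e) (prim1 \<Theta> g e) 1 x = - \<Theta> e x"
  proof -
    fix e x assume e: "e \<in> EE" and x: "x \<in> {0..lE e}"
    have "nderiv (lE e) (prim1 \<Theta> g e) (Suc 0) x = nderiv (lE e) (\<lambda>s. (-1) * \<Theta> e s) 0 x" by (rule prim_row(3)[OF e smT[OF e] row[OF e] x])
    also have "\<dots> = - \<Theta> e x" using smooth_nderiv0[OF edge(7)[OF e] smT[OF e] x] by simp
    finally show "nderiv (lE e) (prim1 \<Theta> g e) 1 x = - \<Theta> e x" by simp
  qed
  have P0: "\<And>e. e \<in> EE \<Longrightarrow> prim1 \<Theta> g e 0 = g e / wE e" using row zero_in by simp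
  show "A10 G (prim1 \<Theta> g)"
    unfolding A10_def
  proof (intro conjI ballI allI impI)
    show "canonical G (prim1 \<Theta> g)" by (auto simp: canonical_def prim1_def)
    fix e assume e: "e \<in> EE"
    show "smooth_cl (lE e) (prim1 \<Theta> g e)" by (rule prim_row(1)[OF e smT[OF e] row[OF e]])
    fix t assume t: "t \<in> {0..lE e}"
    have t': "lE e - t \<in> {0..lE e}" using t by auto
    have cT: "continuous_on {0..lE e} (\<Theta> e)" using smooth_contin A11D(2)[OF A] e by blast
    have "integral {0..t} (\<Theta> (rE e)) = integral {0..t} (\<lambda>s. \<Theta> e (lE e - s))"
      by (rule integral_cong) (use A11D(3)[OF A] e t in auto)
    also have "\<dots> = Ig \<Theta> e - integral {0..lE e - t} (\<Theta> e)" using RefInt[OF cT t] by (simp add: Ig_def)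
    finally have i: "integral {0..t} (\<Theta> (rE e)) = Ig \<Theta> e - integral {0..lE e - t} (\<Theta> e)" .
    have w: "wE e > 0" using edge(9)[OF e] .
    have "prim1 \<Theta> g (rE e) t = g (rE e) / wE e - integral {0..t} (\<Theta> (rE e))"
      using row[OF edge(1)[OF e], of t] t edge[OF e] by simp
    also have "\<dots> = - (g e / wE e - integral {0..lE e - t} (\<Theta> e))"
    proof -
      have "g (rE e) / wE e = Ig \<Theta> e - g e / wE e" using gs[OF e] w by (simp add: field_simps)
      then show ?thesis using i by simp
    qed
    also have "\<dots> = - prim1 \<Theta> g e (lE e - t)" using row[OF e t'] by simp
    finally show "prim1 \<Theta> g (rE e) t = - prim1 \<Theta> g e (lE e - t)" .
  next
    fix e assume e: "e \<in> EE" "valency G (tE e) = 1"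
    obtain e' where o: "out (tE e) = {e'}" using e(2) by (metis card_1_singletonE valency_def)
    have "e \<in> out (tE e)" using e by (simp add: out_def')
    then have "out (tE e) = {e}" using o by simp
    then have g0: "g e = 0" using gd[OF edge(4)[OF e(1)]] by simp
    obtain d where d: "d > 0" "\<forall>x\<in>{0..lE e}. x < d \<longrightarrow> \<Theta> e x = 0" using A11D(4)[OF A] e by blast
    have "\<forall>x\<in>{0..lE e}. x < d \<longrightarrow> (-1) * \<Theta> e x = 0" using d by simp
    then show "\<exists>\<delta>>0. \<forall>x\<in>{0..lE e}. x < \<delta> \<longrightarrow> prim1 \<Theta> g e x = 0"
      using d(1) g0 row[OF e(1)] int_zero_near[of "lE e" d "\<lambda>s. (-1) * \<Theta> e s"] by (intro exI[of _ d]) simp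
  next
    fix v e1 e2 assume v: "v \<in> VV" and o: "out v = {e1, e2} \<and> e1 \<noteq> e2"
    then have e12: "e1 \<in> EE" "e2 \<in> EE" using out_mem by blast+
    have g12: "g e1 + g e2 = 0" using gd[OF v] o by simp
    have sp: "smooth_pair (wt G e1) (lE e1) (\<lambda>x. wE e1 ^ 2 * \<Theta> e1 x) (wt G e2) (lE e2) (\<lambda>x. wE e2 ^ 2 * \<Theta> e2 x)"
      using A11D(5)[OF A] v o by blast
    show "smooth_pair (wt G e1) (lE e1) (\<lambda>x. wE e1 * prim1 \<Theta> g e1 x) (wt G e2) (lE e2) (\<lambda>x. - wE e2 * prim1 \<Theta> g e2 x)"
      unfolding smooth_pair_def
    proof
      fix n
      have z1: "0 \<in> {0..lE e1}" and z2: "0 \<in> {0..lE e2}" using zero_in e12 by auto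
      have s1: "nderiv (lE e1) (\<lambda>x. wE e1 * prim1 \<Theta> g e1 x) n 0 = wE e1 * nderiv (lE e1) (prim1 \<Theta> g e1) n 0"
        by (rule nderiv_scale[OF edge(7)[OF e12(1)] prim_row(1)[OF e12(1) smT[OF e12(1)] row[OF e12(1)]] z1])
      have s2: "nderiv (lE e2) (\<lambda>x. - wE e2 * prim1 \<Theta> g e2 x) n 0 = - wE e2 * nderiv (lE e2) (prim1 \<Theta> g e2) n 0"
        by (rule nderiv_scale[OF edge(7)[OF e12(2)] prim_row(1)[OF e12(2) smT[OF e12(2)] row[OF e12(2)]] z2])
      show "real (wt G e1) ^ n * nderiv (lE e1) (\<lambda>x. wE e1 * prim1 \<Theta> g e1 x) n 0 =
            (- 1) ^ n * real (wt G e2) ^ n * nderiv (lE e2) (\<lambda>x. - wE e2 * prim1 \<Theta> g e2 x) n 0"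
      proof (cases n)
        case 0
        then show ?thesis using s1 s2 prim_row(2)[OF e12(1) smT[OF e12(1)] row[OF e12(1)] z1] prim_row(2)[OF e12(2) smT[OF e12(2)] row[OF e12(2)] z2] P0 e12 g12 edge(9)[OF e12(1)] edge(9)[OF e12(2)]
          by simp
      next
        case (Suc m)
        have spm: "wE e1 ^ m * nderiv (lE e1) (\<lambda>x. wE e1 ^ 2 * \<Theta> e1 x) m 0 = (-1) ^ m * wE e2 ^ m * nderiv (lE e2) (\<lambda>x. wE e2 ^ 2 * \<Theta> e2 x) m 0"
          using sp unfolding smooth_pair_def by blast
        have q: "wE e1 ^ m * (wE e1 ^ 2 * nderiv (lE e1) (\<Theta> e1) m 0) = (-1) ^ m * wE e2 ^ m * (wE e2 ^ 2 * nderiv (lE e2) (\<Theta> e2) m 0)"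
          using spm unfolding nderiv_scale[OF edge(7)[OF e12(1)] smT0[OF e12(1)] z1, of "wE e1 ^ 2" m]
            nderiv_scale[OF edge(7)[OF e12(2)] smT0[OF e12(2)] z2, of "wE e2 ^ 2" m] .
        have "nderiv (lE e1) (prim1 \<Theta> g e1) n 0 = - nderiv (lE e1) (\<Theta> e1) m 0"
          using prim_row(3)[OF e12(1) smT[OF e12(1)] row[OF e12(1)] z1, of m] ndT[OF e12(1) z1] Suc by simp
        moreover have "nderiv (lE e2) (prim1 \<Theta> g e2) n 0 = - nderiv (lE e2) (\<Theta> e2) m 0"
          using prim_row(3)[OF e12(2) smT[OF e12(2)] row[OF e12(2)] z2, of m] ndT[OF e12(2) z2] Suc by simp
        ultimately show ?thesis using s1 s2 q Suc by (simp add: algebra_simps power2_eq_square)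
      qed
    qed
  next
    fix v assume v: "v \<in> VV" "3 \<le> valency G v"
    have "(\<Sum>e\<in>out v. wE e * prim1 \<Theta> g e 0) = (\<Sum>e\<in>out v. g e)"
    proof (rule sum.cong)
      fix e assume "e \<in> out v"
      then have e: "e \<in> EE" using out_mem by blast
      show "wE e * prim1 \<Theta> g e 0 = g e" using P0[OF e] edge(9)[OF e] by simp
    qed simp
    then show "(\<Sum>e\<in>out v. wE e * prim1 \<Theta> g e 0) = 0" using gd[OF v(1)] by simp
  qed
  show "dbar1 G (prim1 \<Theta> g) = \<Theta>"
  proof (intro ext)
    fix e x
    show "dbar1 G (prim1 \<Theta> g) e x = \<Theta> e x"
    proof (cases "e \<in> EE \<and> x \<in> {0..lE e}")
      case True then show ?thesis using nd1 by (simp add: dbar1_def)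
    next
      case False then show ?thesis
        unfolding dbar1_def using canonicalD[OF A11D(1)[OF A] False] by (simp only: if_not_P[OF False] if_False)
    qed
  qed
qed

lemma prim0_ok:
  assumes A: "A01 G \<Theta>"
    and ga: "\<And>e. e \<in> EE \<Longrightarrow> Ig \<Theta> e = gradf a e"
  shows "A00 G (prim0 \<Theta> a)" and "dbar0 G (prim0 \<Theta> a) = \<Theta>"
proof -
  have A: "A10 G \<Theta>" using A by (simp add: A01_def)
  have smT: "\<And>e. e \<in> EE \<Longrightarrow> smooth_cl (lE e) (\<Theta> e)" using A10D(2)[OF A] by blast
  have row: "\<And>e t. e \<in> EE \<Longrightarrow> t \<in> {0..lE e} \<Longrightarrow> prim0 \<Theta> a e t = a (tE e) + integral {0..t} (\<Theta> e)"
    by (simp add: prim0_def)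
  have nd1: "\<And>e x. e \<in> EE \<Longrightarrow> x \<in> {0..lE e} \<Longrightarrow> nderiv (lE e) (prim0 \<Theta> a e) 1 x = \<Theta> e x"
  proof -
    fix e x assume e: "e \<in> EE" and x: "x \<in> {0..lE e}"
    have "nderiv (lE e) (prim0 \<Theta> a e) (Suc 0) x = nderiv (lE e) (\<Theta> e) 0 x" by (rule prim_row(3)[OF e smT[OF e] row[OF e] x])
    also have "\<dots> = \<Theta> e x" using smooth_nderiv0[OF edge(7)[OF e] smT[OF e] x] by simp
    finally show "nderiv (lE e) (prim0 \<Theta> a e) 1 x = \<Theta> e x" by simp
  qed
  have P0: "\<And>e. e \<in> EE \<Longrightarrow> prim0 \<Theta> a e 0 = a (tE e)" using row zero_in by simp
  show "A00 G (prim0 \<Theta> a)"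
    unfolding A00_def
  proof (intro conjI ballI allI impI)
    show "canonical G (prim0 \<Theta> a)" by (auto simp: canonical_def prim0_def)
    fix e assume e: "e \<in> EE"
    show "smooth_cl (lE e) (prim0 \<Theta> a e)" by (rule prim_row(1)[OF e smT[OF e] row[OF e]])
    fix t assume t: "t \<in> {0..lE e}"
    have t': "lE e - t \<in> {0..lE e}" using t by auto
    have cT: "continuous_on {0..lE e} (\<Theta> e)" using smooth_contin smT e by blast
    have "integral {0..t} (\<Theta> (rE e)) = integral {0..t} (\<lambda>s. - \<Theta> e (lE e - s))"
      by (rule integral_cong) (use A10D(3)[OF A] e t in auto)
    also have "\<dots> = - (Ig \<Theta> e - integral {0..lE e - t} (\<Theta> e))" using RefInt[OF cT t] by (simp add: Ig_def integral_neg)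
    finally have i: "integral {0..t} (\<Theta> (rE e)) = - (Ig \<Theta> e - integral {0..lE e - t} (\<Theta> e))" .
    have "prim0 \<Theta> a (rE e) t = a (hE e) + integral {0..t} (\<Theta> (rE e))"
      using row[OF edge(1)[OF e], of t] t edge[OF e] by simp
    also have "\<dots> = a (tE e) + integral {0..lE e - t} (\<Theta> e)"
      using i ga[OF e] by (simp add: gradf_def)
    also have "\<dots> = prim0 \<Theta> a e (lE e - t)" using row[OF e t'] by simp
    finally show "prim0 \<Theta> a (rE e) t = prim0 \<Theta> a e (lE e - t)" .
  next
    fix e e' assume "e \<in> EE" "e' \<in> EE" "tE e = tE e'"
    then show "prim0 \<Theta> a e 0 = prim0 \<Theta> a e' 0" using P0 by simp
  next
    fix e assume e: "e \<in> EE" "valency G (tE e) = 1"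
    obtain d where d: "d > 0" "\<forall>x\<in>{0..lE e}. x < d \<longrightarrow> \<Theta> e x = 0" using A10D(4)[OF A] e by blast
    show "\<exists>\<delta>>0. \<forall>x\<in>{0..lE e}. x < \<delta> \<longrightarrow> prim0 \<Theta> a e x = prim0 \<Theta> a e 0"
      using d P0[OF e(1)] row[OF e(1)] int_zero_near[of "lE e" d "\<Theta> e"] by (intro exI[of _ d]) simp
  next
    fix v e1 e2 assume v: "v \<in> VV" and o: "out v = {e1, e2} \<and> e1 \<noteq> e2"
    then have e12: "e1 \<in> EE" "e2 \<in> EE" "tE e1 = v" "tE e2 = v" using out_mem by blast+
    have sp: "smooth_pair (wt G e1) (lE e1) (\<lambda>x. wE e1 * \<Theta> e1 x) (wt G e2) (lE e2) (\<lambda>x. - wE e2 * \<Theta> e2 x)"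
      using A10D(5)[OF A] v o by blast
    show "smooth_pair (wt G e1) (lE e1) (prim0 \<Theta> a e1) (wt G e2) (lE e2) (prim0 \<Theta> a e2)"
      unfolding smooth_pair_def
    proof
      fix n
      have z1: "0 \<in> {0..lE e1}" and z2: "0 \<in> {0..lE e2}" using zero_in e12 by auto
      show "real (wt G e1) ^ n * nderiv (lE e1) (prim0 \<Theta> a e1) n 0 =
            (- 1) ^ n * real (wt G e2) ^ n * nderiv (lE e2) (prim0 \<Theta> a e2) n 0"
      proof (cases n)
        case 0
        then show ?thesis using prim_row(2)[OF e12(1) smT[OF e12(1)] row[OF e12(1)] z1] prim_row(2)[OF e12(2) smT[OF e12(2)] row[OF e12(2)] z2] P0 e12 by simp
      next
        case (Suc m)
        have spm: "wE e1 ^ m * nderiv (lE e1) (\<lambda>x. wE e1 * \<Theta> e1 x) m 0 = (-1) ^ m * wE e2 ^ m * nderiv (lE e2) (\<lambda>x. - wE e2 * \<Theta> e2 x) m 0"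
          using sp unfolding smooth_pair_def by blast
        have q: "wE e1 ^ m * (wE e1 * nderiv (lE e1) (\<Theta> e1) m 0) = (-1) ^ m * wE e2 ^ m * (- wE e2 * nderiv (lE e2) (\<Theta> e2) m 0)"
          using spm nderiv_scale[OF edge(7)[OF e12(1)] smT[OF e12(1)] z1, of "wE e1" m]
            nderiv_scale[OF edge(7)[OF e12(2)] smT[OF e12(2)] z2, of "- wE e2" m]
          by simp
        show ?thesis using prim_row(3)[OF e12(1) smT[OF e12(1)] row[OF e12(1)] z1, of m] prim_row(3)[OF e12(2) smT[OF e12(2)] row[OF e12(2)] z2, of m] q Suc
          by (simp add: algebra_simps)
      qed
    qed
  next
    fix v assume v: "v \<in> VV" "3 \<le> valency G v"
    have "(\<Sum>e\<in>out v. wE e * nderiv (lE e) (prim0 \<Theta> a e) 1 0) = (\<Sum>e\<in>out v. wE e * \<Theta> e 0)"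
    proof (rule sum.cong)
      fix e assume "e \<in> out v"
      then have e: "e \<in> EE" using out_mem by blast
      show "wE e * nderiv (lE e) (prim0 \<Theta> a e) 1 0 = wE e * \<Theta> e 0" using nd1[OF e zero_in[OF e]] by simp
    qed simp
    then show "(\<Sum>e\<in>out v. wE e * nderiv (lE e) (prim0 \<Theta> a e) 1 0) = 0" using A10D(6)[OF A] v by simp
  qed
  show "dbar0 G (prim0 \<Theta> a) = \<Theta>"
  proof (intro ext)
    fix e x
    show "dbar0 G (prim0 \<Theta> a) e x = \<Theta> e x"
    proof (cases "e \<in> EE \<and> x \<in> {0..lE e}")
      case True then show ?thesis using nd1 by (simp add: dbar0_def)
    next
      case False then show ?thesis
        unfolding dbar0_def using canonicalD[OF A10D(1)[OF A] False] by (simp only: if_not_P[OF False] if_False)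
    qed
  qed
qed

end

context wg
begin

lemma int11: "A11 G F \<Longrightarrow> x \<in> EE \<Longrightarrow> F x integrable_on {0..lE x}"
  using A11D(2) smooth_integrable by blast
lemma int10: "A10 G F \<Longrightarrow> x \<in> EE \<Longrightarrow> F x integrable_on {0..lE x}"
  using A10D(2) smooth_integrable by blast

lemma sum_cB: "e \<in> EE \<Longrightarrow> (\<Sum>x\<in>EE. f x * cB e x) = f e + f (rE e)"
proof -
  assume e: "e \<in> EE"
  have "(\<Sum>x\<in>EE. f x * cB e x) = (\<Sum>x\<in>EE. f x * (if e = x then 1 else 0)) + (\<Sum>x\<in>EE. f x * (if e = rE x then 1 else 0))"
    unfolding sum.distrib[symmetric]
  proof (rule sum.cong)
    fix x assume x: "x \<in> EE"
    have "cB e x = (if e = x then 1 else 0) + (if e = rE x then 1 else 0)"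
      using rE_eq[OF x e] edge(3)[OF e] edge(2)[OF e] by (auto simp: cB_def)
    then show "f x * cB e x = f x * (if e = x then 1 else 0) + f x * (if e = rE x then 1 else 0)"
      by (simp add: distrib_left)
  qed simp
  also have "\<dots> = f e + f (rE e)" using sum_if_eq[OF e] sum_if_rev[OF e] by simp
  finally show ?thesis .
qed

lemma lsp_sum:
  assumes Y: "lsp Y" and I: "finite I" and F: "\<And>i. i \<in> I \<Longrightarrow> F i \<in> Y"
  shows "(\<lambda>e t. \<Sum>i\<in>I. c i * F i e t) \<in> Y"
proof -
  have z: "lin_fun_on Y (\<lambda>_. 0)" by (simp add: lin_fun_on_def)
  show ?thesis using lfo_sum[where F=F, OF Y z I F, of c] by blast
qed

lemma Ex1:
  assumes A: "A11 G \<Theta>" and hyp: "\<And>a. LC a \<Longrightarrow> (\<Sum>e\<in>EE. wE e * a (tE e) * Ig \<Theta> e) = 0"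
  shows "\<Theta> \<in> dbar1 G ` {\<alpha>. A10 G \<alpha>}"
proof -
  define u where "u e = wE e * Ig \<Theta> e" for e
  define t where "t v = - (1/2) * (\<Sum>e\<in>out v. u e)" for v
  have "ip VV t a = 0" if aLC: "LC a" for a
  proof -
    have "ip VV t a = (\<Sum>v\<in>VV. (- (1/2)) * (a v * (\<Sum>e\<in>out v. u e)))"
      unfolding ip_def by (rule sum.cong) (simp_all add: t_def)
    also have "\<dots> = - (1/2) * (\<Sum>v\<in>VV. a v * (\<Sum>e\<in>out v. u e))"
      by (rule sum_distrib_left[symmetric])
    also have "(\<Sum>v\<in>VV. a v * (\<Sum>e\<in>out v. u e)) = (\<Sum>e\<in>EE. u e * a (tE e))"
      by (rule sum_group_tail[symmetric])
    also have "\<dots> = (\<Sum>e\<in>EE. wE e * a (tE e) * Ig \<Theta> e)" by (simp add: u_def algebra_simps)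
    finally show ?thesis using hyp[OF aLC] by simp
  qed
  then obtain h where hA: "Anti h" and hd: "\<And>v. v \<in> VV \<Longrightarrow> divf h v = t v" using LA1 by blast
  define g where "g e = u e / 2 + h e" for e
  have gs: "g e + g (rE e) = wE e * Ig \<Theta> e" if e: "e \<in> EE" for e
    using hA e Ig_sym11[OF A e] edge[OF e] by (simp add: g_def u_def Anti_def)
  have gd: "(\<Sum>e\<in>out v. g e) = 0" if v: "v \<in> VV" for v
    using hd[OF v] by (simp add: g_def sum.distrib divf_def t_def sum_divide_distrib)
  have P1: "A10 G (prim1 \<Theta> g)" by (rule prim1_ok(1)[OF A]) (use gs gd in auto)
  have P2: "dbar1 G (prim1 \<Theta> g) = \<Theta>" by (rule prim1_ok(2)[OF A]) (use gs gd in auto)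
  show ?thesis by (rule image_eqI[where x="prim1 \<Theta> g"]) (simp_all add: P1 P2)
qed


lemma intBf: "x \<in> EE \<Longrightarrow> e \<in> EE \<Longrightarrow> Bf e x integrable_on {0..lE x}"
  using int11[OF A11_Bf] by blast

lemma wt_nz: "e \<in> EE \<Longrightarrow> wt G e \<noteq> 0"
  using edge(9) by fastforce

lemma LC_D: "LC a \<Longrightarrow> e \<in> EE \<Longrightarrow> a (hE e) = a (tE e)"
  unfolding LC_def by simp

lemma cB_sym: "e \<in> EE \<Longrightarrow> x \<in> EE \<Longrightarrow> cB e x = cB x e"
  unfolding cB_def using rE_eq[of x e] rE_eq[of e x] by auto

lemma sum_cB': "x \<in> EE \<Longrightarrow> (\<Sum>e\<in>EE. f e * cB e x) = f x + f (rE x)"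
proof -
  assume x: "x \<in> EE"
  have "(\<Sum>e\<in>EE. f e * cB e x) = (\<Sum>e\<in>EE. f e * cB x e)"
    by (rule sum.cong) (simp_all add: cB_sym x)
  then show ?thesis using sum_cB[OF x] by simp
qed

lemma B_ka_Bf:
  assumes aLC: "LC a" and e: "e \<in> EE"
  shows "integral_graph G (wedge (ka a) (Bf e)) = wE e * a (tE e)"
proof -
  have "(\<Sum>x\<in>EE. wE x * a (tE x) * Ig (Bf e) x) = (\<Sum>x\<in>EE. (wE x * a (tE x)) * cB e x)"
    by (rule sum.cong) (simp_all add: Ig_Bf)
  also have "\<dots> = wE e * a (tE e) + wE (rE e) * a (tE (rE e))" by (rule sum_cB[OF e])
  also have "\<dots> = 2 * (wE e * a (tE e))" using LC_D[OF aLC e] e edge[OF e] by simp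
  finally show ?thesis by (simp add: pair_ka)
qed

lemma Ig_diff:
  assumes "A11 G y" "A11 G y'" "e \<in> EE"
  shows "Ig (\<lambda>e t. y e t - y' e t) e = Ig y e - Ig y' e"
  unfolding Ig_def by (rule integral_diff) (use int11 assms in auto)

lemma p1c4:
  assumes y: "A11 G y" and y': "A11 G y'"
    and eq: "\<forall>k\<in>H00 G. integral_graph G (wedge k y) = integral_graph G (wedge k y')"
  shows "(\<lambda>e t. y e t - y' e t) \<in> dbar1 G ` {\<alpha>. A10 G \<alpha>}"
proof -
  have "A11 G (\<lambda>e t. 1 * y e t + (-1) * y' e t)" by (rule A11_lin[OF y y'])
  then have TA: "A11 G (\<lambda>e t. y e t - y' e t)" by simp
  show ?thesis
  proof (rule Ex1[OF TA])
    fix a assume aLC: "LC a"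
    have "integral_graph G (wedge (ka a) y) = integral_graph G (wedge (ka a) y')"
      using eq ka_H00[OF aLC] by blast
    then have q: "(\<Sum>e\<in>EE. wE e * a (tE e) * Ig y e) = (\<Sum>e\<in>EE. wE e * a (tE e) * Ig y' e)"
      by (simp add: pair_ka)
    have "(\<Sum>e\<in>EE. wE e * a (tE e) * Ig (\<lambda>e t. y e t - y' e t) e)
        = (\<Sum>e\<in>EE. wE e * a (tE e) * Ig y e) - (\<Sum>e\<in>EE. wE e * a (tE e) * Ig y' e)"
      unfolding sum_subtractf[symmetric]
      by (rule sum.cong) (simp_all add: Ig_diff[OF y y'] algebra_simps)
    then show "(\<Sum>e\<in>EE. wE e * a (tE e) * Ig (\<lambda>e t. y e t - y' e t) e) = 0" using q by simp
  qed
qed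

lemma p1c2:
  assumes \<phi>: "lin_fun_on {\<Omega>. A11 G \<Omega>} \<phi>" and \<phi>0: "\<forall>n\<in>dbar1 G ` {\<alpha>. A10 G \<alpha>}. \<phi> n = 0"
  shows "\<exists>!k. k \<in> H00 G \<and> (\<forall>y\<in>{\<Omega>. A11 G \<Omega>}. integral_graph G (wedge k y) = \<phi> y)"
proof -
  have Y: "lsp {\<Omega>. A11 G \<Omega>}" by (rule lsp_A11)
  have BfY: "\<And>e. e \<in> EE \<Longrightarrow> Bf e \<in> {\<Omega>. A11 G \<Omega>}" using A11_Bf by simp
  define c where "c e = \<phi> (Bf e) / wE e" for e
  have cc: "c e = c e'" if e: "e \<in> EE" and e': "e' \<in> EE" and tt: "tE e = tE e'" for e e'
  proof -
    define \<Theta> where "\<Theta> = (\<lambda>x t. (1 / wE e) * Bf e x t + (- (1 / wE e')) * Bf e' x t)"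
    have TA: "A11 G \<Theta>" unfolding \<Theta>_def by (rule A11_lin[OF A11_Bf[OF e] A11_Bf[OF e']])
    have IgT: "Ig \<Theta> x = (1 / wE e) * cB e x - (1 / wE e') * cB e' x" if x: "x \<in> EE" for x
      unfolding \<Theta>_def using Ig_lin[where F="Bf e" and H="Bf e'" and e=x, OF intBf[OF x e] intBf[OF x e'], of "1 / wE e" "- (1 / wE e')"]
        Ig_Bf[OF x] by simp
    have "\<Theta> \<in> dbar1 G ` {\<alpha>. A10 G \<alpha>}"
    proof (rule Ex1[OF TA])
      fix a assume aLC: "LC a"
      have "(\<Sum>x\<in>EE. wE x * a (tE x) * Ig \<Theta> x)
          = (1 / wE e) * (\<Sum>x\<in>EE. (wE x * a (tE x)) * cB e x) - (1 / wE e') * (\<Sum>x\<in>EE. (wE x * a (tE x)) * cB e' x)"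
        unfolding sum_distrib_left sum_subtractf[symmetric]
        by (rule sum.cong) (simp_all add: IgT algebra_simps)
      also have "\<dots> = (1 / wE e) * (wE e * a (tE e) + wE (rE e) * a (tE (rE e))) - (1 / wE e') * (wE e' * a (tE e') + wE (rE e') * a (tE (rE e')))"
        by (simp add: sum_cB[OF e] sum_cB[OF e'])
      also have "\<dots> = 0" using LC_D[OF aLC e] LC_D[OF aLC e'] edge[OF e] edge[OF e'] tt by (simp add: field_simps)
      finally show "(\<Sum>x\<in>EE. wE x * a (tE x) * Ig \<Theta> x) = 0" .
    qed
    then have "\<phi> \<Theta> = 0" using \<phi>0 by blast
    moreover have "\<phi> \<Theta> = (1 / wE e) * \<phi> (Bf e) + (- (1 / wE e')) * \<phi> (Bf e')"
      unfolding \<Theta>_def by (rule lfo_lin[OF Y \<phi> BfY[OF e] BfY[OF e']])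
    ultimately show ?thesis by (simp add: c_def)
  qed
  define a where "a v = c (SOME e. e \<in> out v)" for v
  have at: "a (tE e) = c e" if e: "e \<in> EE" for e
  proof -
    have "e \<in> out (tE e)" using e by (simp add: out_def')
    then have "(SOME e'. e' \<in> out (tE e)) \<in> out (tE e)" by (rule someI)
    then have s1: "(SOME e'. e' \<in> out (tE e)) \<in> EE" and s2: "tE (SOME e'. e' \<in> out (tE e)) = tE e"
      using out_mem by blast+
    show ?thesis unfolding a_def by (rule cc[OF s1 e s2])
  qed
  have aLC: "LC a" unfolding LC_def
  proof
    fix e assume e: "e \<in> EE"
    have "a (hE e) = c (rE e)" using at[OF edge(1)[OF e]] edge[OF e] by simp
    also have "\<dots> = c e" using Bf_rev[OF e] edge[OF e] by (simp add: c_def)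
    finally show "a (tE e) = a (hE e)" using at[OF e] by simp
  qed
  have rep: "integral_graph G (wedge (ka a) \<Omega>) = \<phi> \<Omega>" if \<Omega>: "A11 G \<Omega>" for \<Omega>
  proof -
    define S where "S = (\<lambda>x t. \<Sum>e\<in>EE. (Ig \<Omega> e / 2) * Bf e x t)"
    have SS: "S \<in> {\<Omega>. A11 G \<Omega>} \<and> \<phi> S = (\<Sum>e\<in>EE. (Ig \<Omega> e / 2) * \<phi> (Bf e))"
      unfolding S_def by (rule lfo_sum[OF Y \<phi> fin(2) BfY])
    then have SA: "A11 G S" by simp
    define \<Theta> where "\<Theta> = (\<lambda>x t. 1 * \<Omega> x t + (-1) * S x t)"
    have TA: "A11 G \<Theta>" unfolding \<Theta>_def by (rule A11_lin[OF \<Omega> SA])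
    have IgS: "Ig S x = Ig \<Omega> x" if x: "x \<in> EE" for x
    proof -
      have "Ig S x = (\<Sum>e\<in>EE. (Ig \<Omega> e / 2) * Ig (Bf e) x)"
        unfolding S_def by (rule Ig_sum[OF fin(2)]) (use intBf[OF x] in blast)
      also have "\<dots> = (\<Sum>e\<in>EE. (Ig \<Omega> e / 2) * cB e x)" by (simp add: Ig_Bf x)
      also have "\<dots> = Ig \<Omega> x / 2 + Ig \<Omega> (rE x) / 2" by (rule sum_cB'[OF x])
      also have "\<dots> = Ig \<Omega> x" using Ig_sym11[OF \<Omega> x] by simp
      finally show ?thesis .
    qed
    have "\<Theta> \<in> dbar1 G ` {\<alpha>. A10 G \<alpha>}"
    proof (rule Ex1[OF TA])
      fix b :: "'v \<Rightarrow> real"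
      have "Ig \<Theta> x = 0" if x: "x \<in> EE" for x
        unfolding \<Theta>_def using Ig_lin[where F=\<Omega> and H=S and e=x, OF int11[OF \<Omega> x] int11[OF SA x], of 1 "-1"] IgS[OF x] by simp
      then show "(\<Sum>e\<in>EE. wE e * b (tE e) * Ig \<Theta> e) = 0" by simp
    qed
    then have "\<phi> \<Theta> = 0" using \<phi>0 by blast
    moreover have "\<phi> \<Theta> = 1 * \<phi> \<Omega> + (-1) * \<phi> S"
      unfolding \<Theta>_def by (rule lfo_lin[OF Y \<phi>]) (use \<Omega> SA in auto)
    ultimately have "\<phi> \<Omega> = \<phi> S" by simp
    also have "\<dots> = (\<Sum>e\<in>EE. (Ig \<Omega> e / 2) * \<phi> (Bf e))" using SS by simp
    also have "\<dots> = (1/2) * (\<Sum>e\<in>EE. wE e * a (tE e) * Ig \<Omega> e)"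
      unfolding sum_distrib_left
      by (rule sum.cong) (use at edge(9) in \<open>simp_all add: c_def\<close>)
    finally show ?thesis by (simp add: pair_ka)
  qed
  have kH: "ka a \<in> H00 G" by (rule ka_H00[OF aLC])
  show ?thesis
  proof (rule ex1I[of _ "ka a"])
    show "ka a \<in> H00 G \<and> (\<forall>y\<in>{\<Omega>. A11 G \<Omega>}. integral_graph G (wedge (ka a) y) = \<phi> y)"
      using kH rep by simp
  next
    fix k assume k: "k \<in> H00 G \<and> (\<forall>y\<in>{\<Omega>. A11 G \<Omega>}. integral_graph G (wedge k y) = \<phi> y)"
    obtain b where bLC: "LC b" and kb: "k = ka b" using H00_ka k by blast
    have "b (tE e) = a (tE e)" if e: "e \<in> EE" for e
    proof -
      have "wE e * b (tE e) = \<phi> (Bf e)" using k kb B_ka_Bf[OF bLC e] A11_Bf[OF e] by simp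
      moreover have "wE e * a (tE e) = \<phi> (Bf e)" using rep[OF A11_Bf[OF e]] B_ka_Bf[OF aLC e] by simp
      ultimately have "wE e * b (tE e) = wE e * a (tE e)" by simp
      then show ?thesis using wt_nz[OF e] by simp
    qed
    then show "k = ka a" unfolding kb by (auto simp: ka_def fun_eq_iff)
  qed
qed

lemma nonempty_out:
  assumes ni: "no_isolated_vertices G" and v: "v \<in> VV"
  shows "(SOME e. e \<in> out v) \<in> out v"
proof -
  have "valency G v \<ge> 1" using ni v by (simp add: no_isolated_vertices_def)
  then have "out v \<noteq> {}" by (auto simp: valency_def)
  then show ?thesis by (simp add: some_in_eq)
qed

lemma p1c3:
  assumes ni: "no_isolated_vertices G" and \<psi>: "lin_fun_on (H00 G) \<psi>"
  shows "\<exists>y\<in>{\<Omega>. A11 G \<Omega>}. \<forall>k\<in>H00 G. integral_graph G (wedge k y) = \<psi> k"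
proof -
  obtain z where zLC: "\<And>v. LC (z v)" and zrep: "\<And>a u. LC a \<Longrightarrow> u \<in> VV \<Longrightarrow> a u = (\<Sum>v\<in>VV. a v * z v u)"
    using LA3 by blast
  define ev where "ev v = (SOME e. e \<in> out v)" for v
  have evo: "ev v \<in> EE" "tE (ev v) = v" if v: "v \<in> VV" for v
    using nonempty_out[OF ni v] out_mem unfolding ev_def by blast+
  define d where "d v = \<psi> (ka (z v)) / wE (ev v)" for v
  define \<Omega> where "\<Omega> = (\<lambda>x t. \<Sum>v\<in>VV. d v * Bf (ev v) x t)"
  have OA: "A11 G \<Omega>" unfolding \<Omega>_def using lsp_sum[OF lsp_A11 fin(1), of "\<lambda>v. Bf (ev v)" d] A11_Bf evo by simp
  have IgO: "Ig \<Omega> x = (\<Sum>v\<in>VV. d v * cB (ev v) x)" if x: "x \<in> EE" for x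
  proof -
    have "Ig \<Omega> x = (\<Sum>v\<in>VV. d v * Ig (Bf (ev v)) x)"
      unfolding \<Omega>_def by (rule Ig_sum[OF fin(1)]) (use intBf[OF x] evo in blast)
    then show ?thesis by (simp add: Ig_Bf x)
  qed
  have "integral_graph G (wedge k \<Omega>) = \<psi> k" if k: "k \<in> H00 G" for k
  proof -
    obtain a where aLC: "LC a" and ka: "k = ka a" using H00_ka k by blast
    have "(\<Sum>x\<in>EE. wE x * a (tE x) * Ig \<Omega> x) = (\<Sum>x\<in>EE. \<Sum>v\<in>VV. d v * ((wE x * a (tE x)) * cB (ev v) x))"
      by (rule sum.cong) (simp_all add: IgO sum_distrib_left algebra_simps)
    also have "\<dots> = (\<Sum>v\<in>VV. \<Sum>x\<in>EE. d v * ((wE x * a (tE x)) * cB (ev v) x))"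
      by (rule sum.swap)
    also have "\<dots> = (\<Sum>v\<in>VV. d v * (\<Sum>x\<in>EE. (wE x * a (tE x)) * cB (ev v) x))"
      by (simp only: sum_distrib_left)
    also have "\<dots> = (\<Sum>v\<in>VV. d v * (2 * (wE (ev v) * a v)))"
    proof (rule sum.cong)
      fix v assume v: "v \<in> VV"
      have "(\<Sum>x\<in>EE. (wE x * a (tE x)) * cB (ev v) x) = wE (ev v) * a (tE (ev v)) + wE (rE (ev v)) * a (tE (rE (ev v)))"
        by (rule sum_cB[OF evo(1)[OF v]])
      also have "\<dots> = 2 * (wE (ev v) * a v)" using LC_D[OF aLC evo(1)[OF v]] evo[OF v] edge[OF evo(1)[OF v]] by simp
      finally show "d v * (\<Sum>x\<in>EE. (wE x * a (tE x)) * cB (ev v) x) = d v * (2 * (wE (ev v) * a v))" by simp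
    qed simp
    also have "\<dots> = 2 * (\<Sum>v\<in>VV. a v * \<psi> (ka (z v)))"
      unfolding sum_distrib_left
    proof (rule sum.cong)
      fix v assume v: "v \<in> VV"
      have w: "wt G (ev v) \<noteq> 0" using wt_nz evo(1)[OF v] by blast
      show "d v * (2 * (wE (ev v) * a v)) = 2 * (a v * \<psi> (ka (z v)))" using w by (simp add: d_def)
    qed simp
    finally have B: "integral_graph G (wedge k \<Omega>) = (\<Sum>v\<in>VV. a v * \<psi> (ka (z v)))" by (simp add: pair_ka ka)
    have keq: "ka a = (\<lambda>e t. \<Sum>v\<in>VV. a v * ka (z v) e t)"
    proof (intro ext)
      fix e t
      show "ka a e t = (\<Sum>v\<in>VV. a v * ka (z v) e t)"
      proof (cases "e \<in> EE \<and> t \<in> {0..lE e}")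
        case True then show ?thesis using zrep[OF aLC edge(4)[of e]] by (simp add: ka_def)
      next
        case False
        then have "\<And>v. ka (z v) e t = 0" "ka a e t = 0" unfolding ka_def by auto
        then show ?thesis by simp
      qed
    qed
    have "\<psi> (ka a) = (\<Sum>v\<in>VV. a v * \<psi> (ka (z v)))"
      unfolding keq using lfo_sum[OF lsp_H00 \<psi> fin(1), of "\<lambda>v. ka (z v)" a] ka_H00[OF zLC] by blast
    then show ?thesis using B ka by simp
  qed
  then show ?thesis using OA by blast
qed

lemma pairing1':
  assumes ni: "no_isolated_vertices G"
  shows "perfect_pairing (H00 G) {\<Omega>. A11 G \<Omega>} (dbar1 G ` {\<alpha>. A10 G \<alpha>})
           (\<lambda>f \<Omega>. integral_graph G (wedge f \<Omega>))"
  unfolding perfect_pairing_def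
proof (intro conjI allI impI ballI)
  fix k n assume k: "k \<in> H00 G" and n: "n \<in> dbar1 G ` {\<alpha>. A10 G \<alpha>}"
  obtain a where aLC: "LC a" and ka: "k = ka a" using H00_ka k by blast
  obtain \<alpha> where A: "A10 G \<alpha>" and na: "n = dbar1 G \<alpha>" using n by blast
  show "integral_graph G (wedge k n) = 0" using clause1_first[OF aLC A] ka na by simp
next
  fix \<phi> assume a: "lin_fun_on {\<Omega>. A11 G \<Omega>} \<phi> \<and> (\<forall>n\<in>dbar1 G ` {\<alpha>. A10 G \<alpha>}. \<phi> n = 0)"
  show "\<exists>!k. k \<in> H00 G \<and> (\<forall>y\<in>{\<Omega>. A11 G \<Omega>}. integral_graph G (wedge k y) = \<phi> y)"
    by (rule p1c2[OF conjunct1[OF a] conjunct2[OF a]])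
next
  fix \<psi> assume a: "lin_fun_on (H00 G) \<psi>"
  show "\<exists>y\<in>{\<Omega>. A11 G \<Omega>}. \<forall>k\<in>H00 G. integral_graph G (wedge k y) = \<psi> k"
    by (rule p1c3[OF ni a])
next
  fix y y' assume y: "y \<in> {\<Omega>. A11 G \<Omega>}" "y' \<in> {\<Omega>. A11 G \<Omega>}"
    and eq: "\<forall>k\<in>H00 G. integral_graph G (wedge k y) = integral_graph G (wedge k y')"
  have y1: "A11 G y" and y2: "A11 G y'" using y by auto
  show "(\<lambda>e t. y e t - y' e t) \<in> dbar1 G ` {\<alpha>. A10 G \<alpha>}" by (rule p1c4[OF y1 y2 eq])
qed

end

context wg
begin

lemma intCf: "x \<in> EE \<Longrightarrow> e \<in> EE \<Longrightarrow> Cf e x integrable_on {0..lE x}"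
  using int10[OF A10_Cf] by blast

lemma A01_Cf: "e \<in> EE \<Longrightarrow> A01 G (Cf e)"
  using A10_Cf by (simp add: A01_def)

lemma sum_de2: "e \<in> EE \<Longrightarrow> (\<Sum>x\<in>EE. (f::'e \<Rightarrow> real) x * de e x) = f e - f (rE e)"
proof -
  assume e: "e \<in> EE"
  have "(\<Sum>x\<in>EE. f x * de e x) = (\<Sum>x\<in>EE. if x = e then f x else 0) - (\<Sum>x\<in>EE. if x = rE e then f x else 0)"
    unfolding sum_subtractf[symmetric] by (rule sum.cong) (auto simp: de_def)
  then show ?thesis using e edge(1)[OF e] fin(2) by simp
qed

lemma B_ah_Cf:
  assumes hA: "Anti h" and e: "e \<in> EE"
  shows "integral_graph G (wedge (ah h) (Cf e)) = h e"
proof -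
  have "(\<Sum>x\<in>EE. h x * Ig (Cf e) x) = (\<Sum>x\<in>EE. h x * de e x)"
    by (rule sum.cong) (simp_all add: Ig_Cf)
  also have "\<dots> = h e - h (rE e)" by (rule sum_de2[OF e])
  also have "\<dots> = 2 * h e" using hA e by (simp add: Anti_def)
  finally show ?thesis by (simp add: pair_ah)
qed

lemma Ex2:
  assumes A: "A01 G \<Theta>" and hyp: "\<And>h. Circ h \<Longrightarrow> (\<Sum>e\<in>EE. h e * Ig \<Theta> e) = 0"
  shows "\<Theta> \<in> dbar0 G ` {f. A00 G f}"
proof -
  have A': "A10 G \<Theta>" using A by (simp add: A01_def)
  have JA: "Anti (Ig \<Theta>)" unfolding Anti_def using Ig_anti10[OF A'] by blast
  have "ip EE h (Ig \<Theta>) = 0" if "Circ h" for h using hyp[OF that] by (simp add: ip_def)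
  then obtain a where ga: "\<And>e. e \<in> EE \<Longrightarrow> Ig \<Theta> e = gradf a e" using LA2[OF JA] by blast
  have P1: "A00 G (prim0 \<Theta> a)" by (rule prim0_ok(1)[OF A]) (use ga in auto)
  have P2: "dbar0 G (prim0 \<Theta> a) = \<Theta>" by (rule prim0_ok(2)[OF A]) (use ga in auto)
  show ?thesis by (rule image_eqI[where x="prim0 \<Theta> a"]) (simp_all add: P1 P2)
qed

lemma Ig_diff10:
  assumes "A10 G y" "A10 G y'" "e \<in> EE"
  shows "Ig (\<lambda>e t. y e t - y' e t) e = Ig y e - Ig y' e"
  unfolding Ig_def by (rule integral_diff) (use int10 assms in auto)

lemma p2c4:
  assumes y: "A01 G y" and y': "A01 G y'"
    and eq: "\<forall>k\<in>H10 G. integral_graph G (wedge k y) = integral_graph G (wedge k y')"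
  shows "(\<lambda>e t. y e t - y' e t) \<in> dbar0 G ` {f. A00 G f}"
proof -
  have y1: "A10 G y" and y2: "A10 G y'" using y y' by (auto simp: A01_def)
  have "A10 G (\<lambda>e t. 1 * y e t + (-1) * y' e t)" by (rule A10_lin[OF y1 y2])
  then have TA: "A01 G (\<lambda>e t. y e t - y' e t)" by (simp add: A01_def)
  show ?thesis
  proof (rule Ex2[OF TA])
    fix h assume hC: "Circ h"
    have "integral_graph G (wedge (ah h) y) = integral_graph G (wedge (ah h) y')"
      using eq ah_H10[OF hC] by blast
    then have q: "(\<Sum>e\<in>EE. h e * Ig y e) = (\<Sum>e\<in>EE. h e * Ig y' e)"
      by (simp add: pair_ah)
    have "(\<Sum>e\<in>EE. h e * Ig (\<lambda>e t. y e t - y' e t) e) = (\<Sum>e\<in>EE. h e * Ig y e) - (\<Sum>e\<in>EE. h e * Ig y' e)"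
      unfolding sum_subtractf[symmetric]
      by (rule sum.cong) (simp_all add: Ig_diff10[OF y1 y2] algebra_simps)
    then show "(\<Sum>e\<in>EE. h e * Ig (\<lambda>e t. y e t - y' e t) e) = 0" using q by simp
  qed
qed

lemma p2c2:
  assumes \<phi>: "lin_fun_on {\<beta>. A01 G \<beta>} \<phi>" and \<phi>0: "\<forall>n\<in>dbar0 G ` {f. A00 G f}. \<phi> n = 0"
  shows "\<exists>!k. k \<in> H10 G \<and> (\<forall>y\<in>{\<beta>. A01 G \<beta>}. integral_graph G (wedge k y) = \<phi> y)"
proof -
  have Y: "lsp {\<beta>. A01 G \<beta>}" by (rule lsp_A01)
  have CfY: "\<And>e. e \<in> EE \<Longrightarrow> Cf e \<in> {\<beta>. A01 G \<beta>}" using A01_Cf by simp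
  define g where "g e = \<phi> (Cf e)" for e
  have gA: "Anti g" unfolding Anti_def
  proof
    fix e assume e: "e \<in> EE"
    show "g (rE e) = - g e" unfolding g_def Cf_rev[OF e] using lfoD(2)[OF \<phi> CfY[OF e], of "-1"] by simp
  qed
  have gd: "divf g v = 0" if v: "v \<in> VV" for v
  proof -
    define \<beta> where "\<beta> = (\<lambda>x t. \<Sum>e\<in>EE. (gradf (dlt v) e / 2) * Cf e x t)"
    have bb: "\<beta> \<in> {\<beta>. A01 G \<beta>} \<and> \<phi> \<beta> = (\<Sum>e\<in>EE. (gradf (dlt v) e / 2) * \<phi> (Cf e))"
      unfolding \<beta>_def by (rule lfo_sum[OF Y \<phi> fin(2) CfY])
    then have bA: "A01 G \<beta>" by simp
    have Igb: "Ig \<beta> x = gradf (dlt v) x" if x: "x \<in> EE" for x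
    proof -
      have "Ig \<beta> x = (\<Sum>e\<in>EE. (gradf (dlt v) e / 2) * Ig (Cf e) x)"
        unfolding \<beta>_def by (rule Ig_sum[OF fin(2)]) (use intCf[OF x] in blast)
      also have "\<dots> = (\<Sum>e\<in>EE. (gradf (dlt v) e / 2) * de e x)" by (simp add: Ig_Cf x)
      also have "\<dots> = gradf (dlt v) x / 2 - gradf (dlt v) (rE x) / 2" by (rule sum_de[OF x])
      also have "\<dots> = gradf (dlt v) x" using gradf_anti x by (simp add: Anti_def)
      finally show ?thesis .
    qed
    have P1: "A00 G (prim0 \<beta> (dlt v))" by (rule prim0_ok(1)[OF bA]) (use Igb in auto)
    have P2: "dbar0 G (prim0 \<beta> (dlt v)) = \<beta>" by (rule prim0_ok(2)[OF bA]) (use Igb in auto)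
    have "\<beta> \<in> dbar0 G ` {f. A00 G f}" by (rule image_eqI[where x="prim0 \<beta> (dlt v)"]) (simp_all add: P1 P2)
    then have "\<phi> \<beta> = 0" using \<phi>0 by blast
    then have "(\<Sum>e\<in>EE. (gradf (dlt v) e / 2) * g e) = 0" using bb by (simp add: g_def)
    moreover have "(\<Sum>e\<in>EE. (gradf (dlt v) e / 2) * g e) = (1/2) * ip EE g (gradf (dlt v))"
      by (simp add: ip_def sum_distrib_left algebra_simps)
    ultimately show ?thesis using ip_grad_dlt[OF gA, of v] by simp
  qed
  have gC: "Circ g" using gA gd by (simp add: Circ_def)
  have rep: "integral_graph G (wedge (ah g) \<beta>) = \<phi> \<beta>" if b: "A01 G \<beta>" for \<beta>
  proof -
    have b': "A10 G \<beta>" using b by (simp add: A01_def)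
    define S where "S = (\<lambda>x t. \<Sum>e\<in>EE. (Ig \<beta> e / 2) * Cf e x t)"
    have SS: "S \<in> {\<beta>. A01 G \<beta>} \<and> \<phi> S = (\<Sum>e\<in>EE. (Ig \<beta> e / 2) * \<phi> (Cf e))"
      unfolding S_def by (rule lfo_sum[OF Y \<phi> fin(2) CfY])
    then have SA: "A01 G S" by simp
    then have SA': "A10 G S" by (simp add: A01_def)
    define \<Theta> where "\<Theta> = (\<lambda>x t. 1 * \<beta> x t + (-1) * S x t)"
    have TA: "A10 G \<Theta>" unfolding \<Theta>_def by (rule A10_lin[OF b' SA'])
    have IgS: "Ig S x = Ig \<beta> x" if x: "x \<in> EE" for x
    proof -
      have "Ig S x = (\<Sum>e\<in>EE. (Ig \<beta> e / 2) * Ig (Cf e) x)"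
        unfolding S_def by (rule Ig_sum[OF fin(2)]) (use intCf[OF x] in blast)
      also have "\<dots> = (\<Sum>e\<in>EE. (Ig \<beta> e / 2) * de e x)" by (simp add: Ig_Cf x)
      also have "\<dots> = Ig \<beta> x / 2 - Ig \<beta> (rE x) / 2" by (rule sum_de[OF x])
      also have "\<dots> = Ig \<beta> x" using Ig_anti10[OF b' x] by simp
      finally show ?thesis .
    qed
    have IgT: "Ig \<Theta> x = gradf (\<lambda>_. 0) x" if x: "x \<in> EE" for x
      unfolding \<Theta>_def using Ig_lin[where F=\<beta> and H=S and e=x, OF int10[OF b' x] int10[OF SA' x], of 1 "-1"] IgS[OF x]
      by (simp add: gradf_def)
    have TA1: "A01 G \<Theta>" using TA by (simp add: A01_def)
    have P1: "A00 G (prim0 \<Theta> (\<lambda>_. 0))" by (rule prim0_ok(1)[OF TA1]) (use IgT in auto)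
    have P2: "dbar0 G (prim0 \<Theta> (\<lambda>_. 0)) = \<Theta>" by (rule prim0_ok(2)[OF TA1]) (use IgT in auto)
    have "\<Theta> \<in> dbar0 G ` {f. A00 G f}" by (rule image_eqI[where x="prim0 \<Theta> (\<lambda>_. 0)"]) (simp_all add: P1 P2)
    then have "\<phi> \<Theta> = 0" using \<phi>0 by blast
    moreover have "\<phi> \<Theta> = 1 * \<phi> \<beta> + (-1) * \<phi> S"
      unfolding \<Theta>_def by (rule lfo_lin[OF Y \<phi>]) (use b SA in auto)
    ultimately have "\<phi> \<beta> = \<phi> S" by simp
    also have "\<dots> = (\<Sum>e\<in>EE. (Ig \<beta> e / 2) * g e)" using SS by (simp add: g_def)
    also have "\<dots> = (1/2) * (\<Sum>e\<in>EE. g e * Ig \<beta> e)"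
      by (simp add: sum_distrib_left algebra_simps)
    finally show ?thesis by (simp add: pair_ah)
  qed
  have kH: "ah g \<in> H10 G" by (rule ah_H10[OF gC])
  show ?thesis
  proof (rule ex1I[of _ "ah g"])
    show "ah g \<in> H10 G \<and> (\<forall>y\<in>{\<beta>. A01 G \<beta>}. integral_graph G (wedge (ah g) y) = \<phi> y)"
      using kH rep by simp
  next
    fix k assume k: "k \<in> H10 G \<and> (\<forall>y\<in>{\<beta>. A01 G \<beta>}. integral_graph G (wedge k y) = \<phi> y)"
    obtain h where hC: "Circ h" and kh: "k = ah h" using H10_ah k by blast
    have hA: "Anti h" using hC by (simp add: Circ_def)
    have "h e = g e" if e: "e \<in> EE" for e
    proof -
      have "h e = \<phi> (Cf e)" using k kh B_ah_Cf[OF hA e] A01_Cf[OF e] by simp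
      moreover have "g e = \<phi> (Cf e)" using rep[OF A01_Cf[OF e]] B_ah_Cf[OF gA e] by simp
      ultimately show ?thesis by simp
    qed
    then show "k = ah g" unfolding kh by (auto simp: ah_def fun_eq_iff)
  qed
qed

lemma p2c3:
  assumes \<psi>: "lin_fun_on (H10 G) \<psi>"
  shows "\<exists>y\<in>{\<beta>. A01 G \<beta>}. \<forall>k\<in>H10 G. integral_graph G (wedge k y) = \<psi> k"
proof -
  obtain z where zC: "\<And>e. e \<in> EE \<Longrightarrow> Circ (z e)"
    and zrep: "\<And>h x. Circ h \<Longrightarrow> x \<in> EE \<Longrightarrow> h x = (\<Sum>e\<in>EE. h e / 2 * z e x)"
    using LA4 by blast
  define L where "L e = \<psi> (ah (z e))" for e
  define J where "J e = (L e - L (rE e)) / 2" for e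
  have JA: "J (rE x) = - J x" if x: "x \<in> EE" for x unfolding J_def edge(2)[OF x] by (simp add: field_simps)
  define \<beta> where "\<beta> = (\<lambda>x t. \<Sum>e\<in>EE. (J e / 2) * Cf e x t)"
  have bA: "A01 G \<beta>" unfolding \<beta>_def using lsp_sum[OF lsp_A01 fin(2), of Cf "\<lambda>e. J e / 2"] A01_Cf by simp
  have Igb: "Ig \<beta> x = J x" if x: "x \<in> EE" for x
  proof -
    have "Ig \<beta> x = (\<Sum>e\<in>EE. (J e / 2) * Ig (Cf e) x)"
      unfolding \<beta>_def by (rule Ig_sum[OF fin(2)]) (use intCf[OF x] in blast)
    also have "\<dots> = (\<Sum>e\<in>EE. (J e / 2) * de e x)" by (simp add: Ig_Cf x)
    also have "\<dots> = J x / 2 - J (rE x) / 2" by (rule sum_de[OF x])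
    also have "\<dots> = J x" using JA[OF x] by simp
    finally show ?thesis .
  qed
  have "integral_graph G (wedge k \<beta>) = \<psi> k" if k: "k \<in> H10 G" for k
  proof -
    obtain h where hC: "Circ h" and kh: "k = ah h" using H10_ah k by blast
    have hA: "\<And>x. x \<in> EE \<Longrightarrow> h (rE x) = - h x" using hC by (simp add: Circ_def Anti_def)
    have "(\<Sum>x\<in>EE. h x * L (rE x)) = (\<Sum>x\<in>EE. h (rE x) * L (rE (rE x)))"
      by (rule sum_rev[symmetric])
    also have "\<dots> = (\<Sum>x\<in>EE. - (h x * L x))" by (rule sum.cong) (use hA edge in auto)
    finally have r: "(\<Sum>x\<in>EE. h x * L (rE x)) = - (\<Sum>x\<in>EE. h x * L x)" by (simp add: sum_negf)
    have "(\<Sum>x\<in>EE. h x * Ig \<beta> x) = (\<Sum>x\<in>EE. h x * J x)" by (rule sum.cong) (simp_all add: Igb)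
    also have "\<dots> = ((\<Sum>x\<in>EE. h x * L x) - (\<Sum>x\<in>EE. h x * L (rE x))) / 2"
      by (simp add: J_def sum_divide_distrib[symmetric] sum_subtractf[symmetric] right_diff_distrib)
    also have "\<dots> = (\<Sum>x\<in>EE. h x * L x)" using r by simp
    finally have B: "integral_graph G (wedge k \<beta>) = (\<Sum>e\<in>EE. h e / 2 * L e)"
      by (simp add: pair_ah kh sum_divide_distrib)
    have keq: "ah h = (\<lambda>x t. \<Sum>e\<in>EE. h e / 2 * ah (z e) x t)"
    proof (intro ext)
      fix x t
      show "ah h x t = (\<Sum>e\<in>EE. h e / 2 * ah (z e) x t)"
      proof (cases "x \<in> EE \<and> t \<in> {0..lE x}")
        case True
        then have "h x = (\<Sum>e\<in>EE. h e / 2 * z e x)" using zrep[OF hC] by blast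
        then show ?thesis using True by (simp add: ah_def sum_divide_distrib)
      next
        case False
        then have "\<And>e. ah (z e) x t = 0" "ah h x t = 0" unfolding ah_def by auto
        then show ?thesis by simp
      qed
    qed
    have "\<psi> (ah h) = (\<Sum>e\<in>EE. h e / 2 * \<psi> (ah (z e)))"
      unfolding keq by (rule conjunct2[OF lfo_sum[OF lsp_H10 \<psi> fin(2)]]) (use ah_H10 zC in blast)
    then show ?thesis using B kh by (simp add: L_def)
  qed
  then show ?thesis using bA by blast
qed

lemma pairing2':
  shows "perfect_pairing (H10 G) {\<beta>. A01 G \<beta>} (dbar0 G ` {f. A00 G f})
           (\<lambda>\<alpha> \<beta>. integral_graph G (wedge \<alpha> \<beta>))"
  unfolding perfect_pairing_def
proof (intro conjI allI impI ballI)
  fix k n assume k: "k \<in> H10 G" and n: "n \<in> dbar0 G ` {f. A00 G f}"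
  obtain h where hC: "Circ h" and kh: "k = ah h" using H10_ah k by blast
  obtain f where A: "A00 G f" and nf: "n = dbar0 G f" using n by blast
  show "integral_graph G (wedge k n) = 0" using clause1_second[OF hC A] kh nf by simp
next
  fix \<phi> assume a: "lin_fun_on {\<beta>. A01 G \<beta>} \<phi> \<and> (\<forall>n\<in>dbar0 G ` {f. A00 G f}. \<phi> n = 0)"
  show "\<exists>!k. k \<in> H10 G \<and> (\<forall>y\<in>{\<beta>. A01 G \<beta>}. integral_graph G (wedge k y) = \<phi> y)"
    by (rule p2c2[OF conjunct1[OF a] conjunct2[OF a]])
next
  fix \<psi> assume a: "lin_fun_on (H10 G) \<psi>"
  show "\<exists>y\<in>{\<beta>. A01 G \<beta>}. \<forall>k\<in>H10 G. integral_graph G (wedge k y) = \<psi> k"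
    by (rule p2c3[OF a])
next
  fix y y' assume y: "y \<in> {\<beta>. A01 G \<beta>}" "y' \<in> {\<beta>. A01 G \<beta>}"
    and eq: "\<forall>k\<in>H10 G. integral_graph G (wedge k y) = integral_graph G (wedge k y')"
  have y1: "A01 G y" and y2: "A01 G y'" using y by auto
  show "(\<lambda>e t. y e t - y' e t) \<in> dbar0 G ` {f. A00 G f}" by (rule p2c4[OF y1 y2 eq])
qed

end

theorem proposition2p18:
  fixes G :: "('v, 'e) wmgraph"
  assumes "wmg G"
    and "no_isolated_vertices G"
  shows "perfect_pairing (H00 G) {\<Omega>. A11 G \<Omega>} (dbar1 G ` {\<alpha>. A10 G \<alpha>})
           (\<lambda>f \<Omega>. integral_graph G (wedge f \<Omega>))
       \<and> perfect_pairing (H10 G) {\<beta>. A01 G \<beta>} (dbar0 G ` {f. A00 G f})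
           (\<lambda>\<alpha> \<beta>. integral_graph G (wedge \<alpha> \<beta>))"
proof -
  interpret wg G by (rule wg.intro[OF assms(1)])
  show ?thesis using pairing1'[OF assms(2)] pairing2' by (rule conjI)
qed

end
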